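(* Let $n\ge1$, let $\vec{k}=\{k_1<k_2<\dots<k_t\}\subseteq[n]$ be non-empty with $k_i+1<k_{i+1}$ for $1\le i<t$, and let $N$ be a $\vec k$-complicial $n$-simplex. Then the inclusion $\Lambda^{\vec k}N\subseteq N$ is an anodyne extension; if moreover $0<k_1$ and $k_t<n$, it is an inner anodyne extension.
   Context: Conventions: $[n]=\{0<\dots<n\}$; simplicial operators are order-preserving maps; $\delta_i$ is the face operator omitting $i$. A stratified set is a simplicial set with a set of thin simplices containing every degenerate simplex and no $0$-simplex; stratified maps preserve thinness (category $\mathbf{Strat}$). $\Delta[n]$ is the standard $n$-simplex with only degenerate simplices thin. A stratified subset $U\subseteq X$ is regular if its thin simplices are exactly its simplices thin in $X$; an entire superset of $\Delta[n]$ is a stratified set with the same underlying simplicial set as $\Delta[n]$ (and more thin simplices). For $0\le k\le n$: $\Delta^k[n]$ is $\Delta[n]$ in which $\alpha:[r]\to[n]$ is thin iff degenerate or its image contains $\{k-1,k,k+1\}\cap[n]$; $\Lambda^k[n]$ is the regular subset of $\alpha$ with $\mathrm{im}(\alpha)\cup\{k\}\neq[n]$; $\Delta^k[n]'$ is $\Delta^k[n]$ with additionally all $(n-1)$-faces $\delta_i$, $i\ne k$, thin; $\Delta^k[n]''$ is $\Delta^k[n]$ with all $(n-1)$-faces thin. The elementary anodyne extensions are $\Lambda^k[n]\subseteq\Delta^k[n]$ ($n\ge1$) and $\Delta^k[n]'\subseteq\Delta^k[n]''$ ($n\ge2$), inner if $0<k<n$. An (inner) anodyne extension is a map in the closure of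 pushouts of (inner) elementary anodyne extensions under transfinite composition. A non-degenerate simplex $\alpha:[r]\to[n]$ is $k$-admissible if its image contains $\{k-1,k,k+1\}\cap[n]$. For $\vec k$ as in the claim, an entire superset $N$ of $\Delta[n]$ is a $\vec k$-complicial $n$-simplex if for each $k_i\in\vec k$ and each $k_i$-admissible $\alpha:[r]\to[n]$: (a) $\alpha$ is thin in $N$; (b) if $l\in[r]$ is the integer with $\alpha(l)=k_i$ and $\alpha\circ\delta_l$ is thin in $N$, then $\alpha\circ\delta_j$ is thin in $N$ for each $j\in\{l-1,l+1\}\cap[r]$. $\Lambda^{\vec k}N$ is the regular subset of $N$ consisting of those simplices $\alpha$ with $\mathrm{im}(\alpha)\cup\vec k\ne[n]$. *)

theory Defs
  imports Main
begin

text \<open>A simplicial operator [m] -> [r] is represented by a function nat => nat that is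
  order-preserving on {..m}, maps {..m} into {..r}, and is 0 outside {..m}.\<close>

definition sop :: "nat \<Rightarrow> nat \<Rightarrow> (nat \<Rightarrow> nat) \<Rightarrow> bool" where
  "sop m r f \<longleftrightarrow> (\<forall>i j. i \<le> j \<longrightarrow> j \<le> m \<longrightarrow> f i \<le> f j)
                 \<and> (\<forall>i\<le>m. f i \<le> r) \<and> (\<forall>i. m < i \<longrightarrow> f i = 0)"

text \<open>ocomp m f g is the composite g o f, where f has domain [m].\<close>
definition ocomp :: "nat \<Rightarrow> (nat \<Rightarrow> nat) \<Rightarrow> (nat \<Rightarrow> nat) \<Rightarrow> nat \<Rightarrow> nat" where
  "ocomp m f g = (\<lambda>i. if i \<le> m then g (f i) else 0)"

definition ident :: "nat \<Rightarrow> nat \<Rightarrow> nat" where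
  "ident r = (\<lambda>i. if i \<le> r then i else 0)"

definition face_op :: "nat \<Rightarrow> nat \<Rightarrow> nat \<Rightarrow> nat" where
  "face_op m j = (\<lambda>i. if i \<le> m then (if i < j then i else Suc i) else 0)"

text \<open>A simplicial set with simplices in S, dimension function dm, and right action
  act f m x = x . f of a simplicial operator f : [m] -> [dm x]. Thin simplices T.\<close>
record 'a strat =
  S :: "'a set"
  dm :: "'a \<Rightarrow> nat"
  act :: "(nat \<Rightarrow> nat) \<Rightarrow> nat \<Rightarrow> 'a \<Rightarrow> 'a"
  T :: "'a set"

definition sset :: "'a strat \<Rightarrow> bool" where
  "sset X \<longleftrightarrow>
     (\<forall>x\<in>S X. \<forall>m f. sop m (dm X x) f \<longrightarrow> act X f m x \<in> S X \<and> dm X (act X f m x) = m)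
   \<and> (\<forall>x\<in>S X. act X (ident (dm X x)) (dm X x) x = x)
   \<and> (\<forall>x\<in>S X. \<forall>m r f g. sop r (dm X x) g \<longrightarrow> sop m r f \<longrightarrow>
        act X f m (act X g r x) = act X (ocomp m f g) m x)"

definition degenerate :: "'a strat \<Rightarrow> 'a \<Rightarrow> bool" where
  "degenerate X x \<longleftrightarrow> (\<exists>y\<in>S X. \<exists>f. sop (dm X x) (dm X y) f \<and> \<not> inj_on f {..dm X x}
                          \<and> x = act X f (dm X x) y)"

definition strat :: "'a strat \<Rightarrow> bool" where
  "strat X \<longleftrightarrow> sset X \<and> T X \<subseteq> S X \<and> (\<forall>x\<in>S X. degenerate X x \<longrightarrow> x \<in> T X)
              \<and> (\<forall>x\<in>T X. dm X x \<noteq> 0)"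

definition smap :: "'a strat \<Rightarrow> 'b strat \<Rightarrow> ('a \<Rightarrow> 'b) \<Rightarrow> bool" where
  "smap X Y h \<longleftrightarrow> (\<forall>x\<in>S X. h x \<in> S Y \<and> dm Y (h x) = dm X x
       \<and> (\<forall>m f. sop m (dm X x) f \<longrightarrow> h (act X f m x) = act Y f m (h x))
       \<and> (x \<in> T X \<longrightarrow> h x \<in> T Y))"

text \<open>Pushout squares in Strat (colimits computed levelwise on simplices; the thin
  simplices of the pushout are the images of the thin simplices):
      A --i--> B
      |f       |j
      C --g--> D \<close>
definition is_pushout ::
  "'a strat \<Rightarrow> 'b strat \<Rightarrow> 'c strat \<Rightarrow> 'd strat \<Rightarrow>
   ('a \<Rightarrow> 'b) \<Rightarrow> ('a \<Rightarrow> 'c) \<Rightarrow> ('b \<Rightarrow> 'd) \<Rightarrow> ('c \<Rightarrow> 'd) \<Rightarrow> bool" where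
  "is_pushout A B C D i f j g \<longleftrightarrow>
     strat A \<and> strat B \<and> strat C \<and> strat D
   \<and> smap A B i \<and> smap A C f \<and> smap B D j \<and> smap C D g
   \<and> (\<forall>a\<in>S A. j (i a) = g (f a))
   \<and> S D = j ` S B \<union> g ` S C
   \<and> T D = j ` T B \<union> g ` T C
   \<and> (let R = {(Inl (i a), Inr (f a)) | a. a \<in> S A} in
       \<forall>u\<in>S B <+> S C. \<forall>v\<in>S B <+> S C.
         (case_sum j g u = case_sum j g v) \<longleftrightarrow> (u, v) \<in> (R \<union> R\<inverse>)\<^sup>*)"

definition sub :: "'a strat \<Rightarrow> 'a set \<Rightarrow> 'a set \<Rightarrow> 'a strat" where
  "sub X S' T' = X\<lparr>S := S', T := T'\<rparr>"

definition substrat :: "'a strat \<Rightarrow> 'a set \<Rightarrow> 'a set \<Rightarrow> bool" where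
  "substrat X S' T' \<longleftrightarrow> S' \<subseteq> S X \<and> T' \<subseteq> T X \<and> strat (sub X S' T')"

type_synonym simplex = "nat \<times> (nat \<Rightarrow> nat)"

text \<open>Simplices of Delta[n]: operators alpha : [r] -> [n], represented as (r, alpha).\<close>
definition delta_S :: "nat \<Rightarrow> simplex set" where
  "delta_S n = {(r, f). sop r n f}"

definition delta_act :: "(nat \<Rightarrow> nat) \<Rightarrow> nat \<Rightarrow> simplex \<Rightarrow> simplex" where
  "delta_act g m x = (m, ocomp m g (snd x))"

definition mkD :: "nat \<Rightarrow> simplex set \<Rightarrow> simplex strat" where
  "mkD n Th = \<lparr>S = delta_S n, dm = fst, act = delta_act, T = Th\<rparr>"

definition degen :: "simplex \<Rightarrow> bool" where
  "degen x \<longleftrightarrow> \<not> inj_on (snd x) {..fst x}"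

definition admissible :: "nat \<Rightarrow> nat \<Rightarrow> simplex \<Rightarrow> bool" where
  "admissible n k x \<longleftrightarrow> {k - 1, k, Suc k} \<inter> {..n} \<subseteq> snd x ` {..fst x}"

definition dface :: "nat \<Rightarrow> nat \<Rightarrow> simplex" where
  "dface n i = (n - 1, face_op (n - 1) i)"

definition Delta_k_T :: "nat \<Rightarrow> nat \<Rightarrow> simplex set" where
  "Delta_k_T n k = {x \<in> delta_S n. degen x \<or> admissible n k x}"

definition Delta_k :: "nat \<Rightarrow> nat \<Rightarrow> simplex strat" where
  "Delta_k n k = mkD n (Delta_k_T n k)"

definition Lambda_k :: "nat \<Rightarrow> nat \<Rightarrow> simplex strat" where
  "Lambda_k n k = (let Sx = {x \<in> delta_S n. snd x ` {..fst x} \<union> {k} \<noteq> {..n}} in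
                   sub (Delta_k n k) Sx (Delta_k_T n k \<inter> Sx))"

definition Delta_k' :: "nat \<Rightarrow> nat \<Rightarrow> simplex strat" where
  "Delta_k' n k = mkD n (Delta_k_T n k \<union> {dface n i | i. i \<le> n \<and> i \<noteq> k})"

definition Delta_k'' :: "nat \<Rightarrow> nat \<Rightarrow> simplex strat" where
  "Delta_k'' n k = mkD n (Delta_k_T n k \<union> {dface n i | i. i \<le> n})"

definition elementary :: "bool \<Rightarrow> nat \<Rightarrow> nat \<Rightarrow> simplex strat \<Rightarrow> simplex strat \<Rightarrow> bool" where
  "elementary inner n k A B \<longleftrightarrow> k \<le> n \<and> (inner \<longrightarrow> 0 < k \<and> k < n) \<and>
     ((1 \<le> n \<and> A = Lambda_k n k \<and> B = Delta_k n k)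
    \<or> (2 \<le> n \<and> A = Delta_k' n k \<and> B = Delta_k'' n k))"

definition anod_step :: "bool \<Rightarrow> 'a strat \<Rightarrow> 'a set \<times> 'a set \<Rightarrow> 'a set \<times> 'a set \<Rightarrow> bool" where
  "anod_step inner Y c d \<longleftrightarrow>
     (\<exists>n k A B phi. elementary inner n k A B \<and>
        is_pushout A B (sub Y (fst c) (snd c)) (sub Y (fst d) (snd d)) id phi phi id)"

definition sle :: "'a set \<times> 'a set \<Rightarrow> 'a set \<times> 'a set \<Rightarrow> bool" where
  "sle c d \<longleftrightarrow> fst c \<subseteq> fst d \<and> snd c \<subseteq> snd d"

text \<open>The inclusion of the stratified subset (S',T') into Y is an (inner) anodyne extension:
  it is a transfinite composite of pushouts of elementary (inner) anodyne extensions.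
  Since such composites are composites of monomorphisms, the stages are represented
  as a well-ordered chain C of stratified subsets of Y, starting at (S',T'), continuous at
  limit stages, with union Y, each successor step being a pushout of an elementary
  (inner) anodyne extension.\<close>
definition anodyne_incl :: "bool \<Rightarrow> 'a strat \<Rightarrow> 'a set \<Rightarrow> 'a set \<Rightarrow> bool" where
  "anodyne_incl inner Y S' T' \<longleftrightarrow> strat Y \<and>
    (\<exists>C :: ('a set \<times> 'a set) set.
        (\<forall>c\<in>C. substrat Y (fst c) (snd c))
      \<and> (S', T') \<in> C \<and> (\<forall>c\<in>C. sle (S', T') c)
      \<and> (\<forall>c\<in>C. \<forall>d\<in>C. sle c d \<or> sle d c)
      \<and> (\<forall>D. D \<subseteq> C \<longrightarrow> D \<noteq> {} \<longrightarrow> (\<exists>c\<in>D. \<forall>d\<in>D. sle c d))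
      \<and> \<Union>(fst ` C) = S Y \<and> \<Union>(snd ` C) = T Y
      \<and> (\<forall>c\<in>C. \<forall>d\<in>C. c \<noteq> d \<longrightarrow> sle c d \<longrightarrow>
            (\<forall>e\<in>C. sle c e \<longrightarrow> e \<noteq> c \<longrightarrow> sle d e) \<longrightarrow> anod_step inner Y c d)
      \<and> (\<forall>c\<in>C. c \<noteq> (S', T') \<longrightarrow>
            \<not> (\<exists>b\<in>C. b \<noteq> c \<and> sle b c \<and> (\<forall>e\<in>C. sle b e \<longrightarrow> e \<noteq> b \<longrightarrow> sle c e)) \<longrightarrow>
            c = (\<Union>{fst b | b. b \<in> C \<and> sle b c \<and> b \<noteq> c}, \<Union>{snd b | b. b \<in> C \<and> sle b c \<and> b \<noteq> c})))"

definition complicial :: "nat \<Rightarrow> nat set \<Rightarrow> simplex set \<Rightarrow> bool" where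
  "complicial n K Th \<longleftrightarrow>
     (\<forall>k\<in>K. \<forall>x\<in>delta_S n. \<not> degen x \<longrightarrow> admissible n k x \<longrightarrow>
        x \<in> Th \<and>
        (\<forall>l\<le>fst x. snd x l = k \<longrightarrow> delta_act (face_op (fst x - 1) l) (fst x - 1) x \<in> Th \<longrightarrow>
            (\<forall>j\<le>fst x. (Suc j = l \<or> j = Suc l) \<longrightarrow>
                delta_act (face_op (fst x - 1) j) (fst x - 1) x \<in> Th)))"

definition Lambda_vec_S :: "nat \<Rightarrow> nat set \<Rightarrow> simplex set" where
  "Lambda_vec_S n K = {x \<in> delta_S n. snd x ` {..fst x} \<union> K \<noteq> {..n}}"

end

theory Submission
  imports Defs
begin



definition img :: "simplex \<Rightarrow> nat set" where "img x = snd x ` {..fst x}"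

definition phiS :: "nat \<Rightarrow> (nat \<Rightarrow> nat) \<Rightarrow> simplex \<Rightarrow> simplex" where
  "phiS m s y = delta_act (snd y) (fst y) (m, s)"

lemma sop_comp: "sop m r f \<Longrightarrow> sop r n g \<Longrightarrow> sop m n (ocomp m f g)"
  unfolding sop_def ocomp_def by auto

lemma ocomp_assoc: "sop m r f \<Longrightarrow> ocomp m (ocomp m f g) h = ocomp m f (ocomp r g h)"
  unfolding sop_def ocomp_def by (auto simp: fun_eq_iff)

lemma ocomp_ident: "sop r n f \<Longrightarrow> ocomp r (ident r) f = f"
  unfolding sop_def ocomp_def ident_def by (auto simp: fun_eq_iff)

lemma sop_ident: "sop r r (ident r)" unfolding sop_def ident_def by auto

lemma delta_S_iff[simp]: "x \<in> delta_S n \<longleftrightarrow> sop (fst x) n (snd x)"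
  unfolding delta_S_def by (cases x) auto

lemma strat_rec:
  assumes "S' \<subseteq> delta_S n"
    and "\<And>x m f. x \<in> S' \<Longrightarrow> sop m (fst x) f \<Longrightarrow> delta_act f m x \<in> S'"
    and "T' \<subseteq> S'" and "\<And>x. x \<in> S' \<Longrightarrow> degen x \<Longrightarrow> x \<in> T'"
    and "\<And>x. x \<in> T' \<Longrightarrow> fst x \<noteq> 0"
  shows "strat \<lparr>S = S', dm = fst, act = delta_act, T = T'\<rparr>"
proof -
  have ss: "sset \<lparr>S = S', dm = fst, act = delta_act, T = T'\<rparr>"
    unfolding sset_def using assms(1,2)
    by (auto simp: delta_act_def ocomp_ident ocomp_assoc subset_iff) (metis ocomp_ident)
  have dg: "degen x" if "degenerate \<lparr>S = S', dm = fst, act = delta_act, T = T'\<rparr> x" for x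
  proof -
    from that obtain y f where f: "\<not> inj_on f {..fst x}" "x = delta_act f (fst x) y"
      unfolding degenerate_def by auto
    then obtain i j where ij: "i \<le> fst x" "j \<le> fst x" "i \<noteq> j" "f i = f j"
      unfolding inj_on_def by auto
    have "snd x = ocomp (fst x) f (snd y)" using arg_cong[of _ _ snd, OF f(2)] by (simp add: delta_act_def)
    hence "snd x i = snd x j" using ij by (simp add: ocomp_def)
    with ij show ?thesis unfolding degen_def inj_on_def by auto
  qed
  show ?thesis unfolding strat_def using ss dg assms(3,4,5) by auto
qed

lemma degen_step:
  assumes "sop r n f" "\<not> inj_on f {..r}"
  obtains i where "i < r" "f i = f (Suc i)"
proof -
  from assms(2) obtain a b where ab: "a \<le> r" "b \<le> r" "a \<noteq> b" "f a = f b"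
    unfolding inj_on_def by auto
  define i j where "i = min a b" and "j = max a b"
  have ij: "i < j" "j \<le> r" "f i = f j" using ab unfolding i_def j_def by (auto simp: min_def max_def)
  have mono: "\<And>a b. a \<le> b \<Longrightarrow> b \<le> r \<Longrightarrow> f a \<le> f b" using assms(1) by (auto simp: sop_def)
  have "f i \<le> f (Suc i)" using mono[of i "Suc i"] ij by simp
  moreover have "f (Suc i) \<le> f j" using mono[of "Suc i" j] ij by simp
  ultimately have "f i = f (Suc i)" using ij by simp
  thus ?thesis using ij by (intro that[of i]) auto
qed

lemma degen_thin:
  assumes st: "strat X" and X: "dm X = fst" "act X = delta_act" and x: "x \<in> S X" "degen x"
    and sub: "S X \<subseteq> delta_S n"
  shows "x \<in> T X"
proof -
  obtain r f where xr: "x = (r, f)" by (cases x)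
  have sopf: "sop r n f" using x sub xr by auto
  have ni: "\<not> inj_on f {..r}" using x(2) xr by (simp add: degen_def)
  obtain i where i: "i < r" "f i = f (Suc i)" using degen_step[OF sopf ni] by blast
  define fc where "fc = face_op (r - 1) (Suc i)"
  have sfc: "sop (r - 1) r fc" unfolding fc_def sop_def face_op_def by auto
  define y where "y = delta_act fc (r - 1) x"
  have ss: "sset X" using st unfolding strat_def by auto
  have y: "y \<in> S X" "dm X y = r - 1" using ss x(1) sfc unfolding sset_def y_def X xr by auto
  define sg where "sg = (\<lambda>j. if j \<le> r then (if j \<le> i then j else j - 1) else 0)"
  have ssg: "sop r (r - 1) sg" unfolding sg_def sop_def using i by auto
  have "sg i = sg (Suc i)" unfolding sg_def using i by auto
  hence nsg: "\<not> inj_on sg {..r}" using i by (metis atMost_iff inj_onD less_eq_Suc_le n_not_Suc_n order.strict_implies_order)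
  have eq: "x = act X sg r y"
  proof -
    have "ocomp r sg (ocomp (r - 1) fc f) = f"
    proof
      fix j show "ocomp r sg (ocomp (r - 1) fc f) j = f j"
        using i sopf unfolding ocomp_def sg_def fc_def face_op_def sop_def
        by (cases "j \<le> r"; cases "j \<le> i"; cases "j = Suc i") (auto simp: not_le Suc_le_eq)
    qed
    thus ?thesis unfolding X y_def xr delta_act_def by simp
  qed
  have dx: "dm X x = r" using X xr by simp
  have "degenerate X x" unfolding degenerate_def dx
    using y eq nsg ssg by (intro bexI[of _ y] exI[of _ sg]) auto
  thus ?thesis using st x unfolding strat_def by auto
qed




definition smono :: "nat \<Rightarrow> (nat \<Rightarrow> nat) \<Rightarrow> bool" where
  "smono m s \<longleftrightarrow> (\<forall>i j. i < j \<longrightarrow> j \<le> m \<longrightarrow> s i < s j)"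

lemma sop_inj_smono: assumes "sop m n s" "inj_on s {..m}" shows "smono m s"
  unfolding smono_def
proof (intro allI impI)
  fix i j :: nat assume ij: "i < j" "j \<le> m"
  have "s i \<le> s j" using assms(1) ij unfolding sop_def by auto
  moreover have "s i \<noteq> s j"
  proof
    assume "s i = s j"
    moreover have "i \<in> {..m}" "j \<in> {..m}" using ij by auto
    ultimately have "i = j" using inj_onD[OF assms(2)] by blast
    thus False using ij by simp
  qed
  ultimately show "s i < s j" by simp
qed

lemma smono_less_iff: "smono m s \<Longrightarrow> i \<le> m \<Longrightarrow> j \<le> m \<Longrightarrow> s i < s j \<longleftrightarrow> i < j"
  unfolding smono_def by (metis linorder_neqE_nat not_less_iff_gr_or_eq)

lemma smono_le_iff: "smono m s \<Longrightarrow> i \<le> m \<Longrightarrow> j \<le> m \<Longrightarrow> s i \<le> s j \<longleftrightarrow> i \<le> j"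
  using smono_less_iff[of m s j i] by (simp add: not_less[symmetric])

lemma smono_eq_iff: "smono m s \<Longrightarrow> i \<le> m \<Longrightarrow> j \<le> m \<Longrightarrow> s i = s j \<longleftrightarrow> i = j"
  using smono_le_iff[of m s i j] smono_le_iff[of m s j i] by auto

lemma fst_phi[simp]: "fst (phiS m s y) = fst y"
  unfolding phiS_def delta_act_def by simp

lemma snd_phi: "snd (phiS m s y) = ocomp (fst y) (snd y) s"
  unfolding phiS_def delta_act_def by simp

lemma phi_in: "sop m n s \<Longrightarrow> y \<in> delta_S m \<Longrightarrow> phiS m s y \<in> delta_S n"
  by (simp add: snd_phi sop_comp)

lemma img_phi: "y \<in> delta_S m \<Longrightarrow> img (phiS m s y) = s ` img y"
  unfolding img_def by (auto simp: snd_phi ocomp_def)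

lemma img_sub: assumes "x \<in> delta_S n" shows "img x \<subseteq> {..n}"
proof -
  have "sop (fst x) n (snd x)" using assms by simp
  thus ?thesis unfolding img_def sop_def by auto
qed

lemma img_act: "sop k (fst y) f \<Longrightarrow> img (delta_act f k y) = snd y ` f ` {..k}"
  unfolding img_def delta_act_def ocomp_def by auto

lemma img_act_sub: "sop k (fst y) f \<Longrightarrow> img (delta_act f k y) \<subseteq> img y"
  using img_act[of k y f] unfolding img_def by (auto simp: sop_def)

lemma act_in: "y \<in> delta_S n \<Longrightarrow> sop k (fst y) f \<Longrightarrow> delta_act f k y \<in> delta_S n"
  by (simp add: delta_act_def sop_comp)

lemma degen_phi:
  assumes "sop m n s" "inj_on s {..m}" "y \<in> delta_S m"
  shows "degen (phiS m s y) \<longleftrightarrow> degen y"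
proof -
  have r: "\<forall>i\<le>fst y. snd y i \<le> m" using assms(3) by (simp add: sop_def)
  have "inj_on (snd (phiS m s y)) {..fst y} \<longleftrightarrow> inj_on (snd y) {..fst y}"
    using r assms(2) unfolding snd_phi ocomp_def inj_on_def by auto
  thus ?thesis unfolding degen_def by simp
qed

lemma phi_inj: assumes "inj_on s {..m}" shows "inj_on (phiS m s) (delta_S m)"
proof
  fix x y assume x: "x \<in> delta_S m" and y: "y \<in> delta_S m" and e: "phiS m s x = phiS m s y"
  have f: "fst x = fst y" using arg_cong[OF e, of fst] by simp
  have se: "ocomp (fst x) (snd x) s = ocomp (fst y) (snd y) s"
    using arg_cong[OF e, of snd] by (simp add: snd_phi)
  have sx: "sop (fst x) m (snd x)" and sy: "sop (fst y) m (snd y)" using x y by auto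
  have "snd x = snd y"
  proof
    fix i show "snd x i = snd y i"
    proof (cases "i \<le> fst x")
      case True
      hence "s (snd x i) = s (snd y i)" using fun_cong[OF se, of i] f by (simp add: ocomp_def)
      moreover have "snd x i \<le> m" "snd y i \<le> m" using sx sy True f unfolding sop_def by auto
      ultimately show ?thesis using assms by (meson atMost_iff inj_onD)
    next
      case False thus ?thesis using sx sy f unfolding sop_def by auto
    qed
  qed
  thus "x = y" using f by (simp add: prod_eq_iff)
qed

lemma phi_act:
  assumes "sop k (fst y) f"
  shows "phiS m s (delta_act f k y) = delta_act f k (phiS m s y)"
  using ocomp_assoc[OF assms, of "snd y" s] by (simp add: phiS_def delta_act_def)

lemma phi_surj:
  assumes sm: "sop m n s" "inj_on s {..m}" and x: "x \<in> delta_S n" and im: "img x \<subseteq> s ` {..m}"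
  shows "\<exists>y\<in>delta_S m. x = phiS m s y"
proof -
  have smo: "smono m s" using sm sop_inj_smono by blast
  define g where "g = (\<lambda>i. if i \<le> fst x then (THE j. j \<le> m \<and> s j = snd x i) else 0)"
  have gp: "g i \<le> m \<and> s (g i) = snd x i" if "i \<le> fst x" for i
  proof -
    have "snd x i \<in> s ` {..m}" using im that unfolding img_def by auto
    then obtain j where j: "j \<le> m" "s j = snd x i" by auto
    have u: "\<And>j'. j' \<le> m \<Longrightarrow> s j' = s j \<Longrightarrow> j' = j" using smono_eq_iff[OF smo] j(1) by blast
    have "(THE j. j \<le> m \<and> s j = snd x i) = j"
      using j u by (intro the_equality; metis)
    thus ?thesis using j that by (simp add: g_def)
  qed
  have sx: "sop (fst x) n (snd x)" using x by simp
  have "sop (fst x) m g"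
    unfolding sop_def
  proof (intro conjI allI impI)
    fix i j assume ij: "i \<le> j" "j \<le> fst x"
    hence "snd x i \<le> snd x j" using sx unfolding sop_def by blast
    hence "s (g i) \<le> s (g j)" using gp[of i] gp[of j] ij by simp
    thus "g i \<le> g j" using gp[of i] gp[of j] ij smono_le_iff[OF smo, of "g i" "g j"] by simp
  next
    fix i assume "i \<le> fst x" thus "g i \<le> m" using gp by blast
  next
    fix i assume "fst x < i" thus "g i = 0" by (simp add: g_def)
  qed
  moreover have "snd x = ocomp (fst x) g s"
  proof
    fix i show "snd x i = ocomp (fst x) g s i"
      using gp[of i] sx unfolding ocomp_def sop_def by auto
  qed
  hence "x = phiS m s (fst x, g)"
    by (simp add: phiS_def delta_act_def prod_eq_iff)
  ultimately show ?thesis by (intro bexI[of _ "(fst x, g)"]) auto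
qed




lemma smono_inj: "smono r f \<Longrightarrow> inj_on f {..r}"
  unfolding inj_on_def using smono_eq_iff by blast

lemma below_img: assumes "smono r f" "i \<le> r"
  shows "{b \<in> f ` {..r}. b < f i} = f ` {..<i}"
proof
  show "{b \<in> f ` {..r}. b < f i} \<subseteq> f ` {..<i}"
    using assms smono_less_iff[OF assms(1)] by fastforce
  show "f ` {..<i} \<subseteq> {b \<in> f ` {..r}. b < f i}"
    using assms smono_less_iff[OF assms(1)] by fastforce
qed

lemma card_below: assumes "smono r f" "i \<le> r"
  shows "card {b \<in> f ` {..r}. b < f i} = i"
proof -
  have "{..<i} \<subseteq> {..r}" using assms(2) by auto
  hence "inj_on f {..<i}" using inj_on_subset[OF smono_inj[OF assms(1)]] by blast
  thus ?thesis unfolding below_img[OF assms] by (simp add: card_image)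
qed

lemma nondeg_unique:
  assumes x: "x \<in> delta_S n" "\<not> degen x" and y: "y \<in> delta_S n" "\<not> degen y"
    and im: "img x = img y"
  shows "x = y"
proof -
  have sx: "smono (fst x) (snd x)" using x sop_inj_smono unfolding degen_def by auto
  have sy: "smono (fst y) (snd y)" using y sop_inj_smono unfolding degen_def by auto
  have cx: "card (img x) = Suc (fst x)" unfolding img_def
    using smono_inj[OF sx] by (simp add: card_image)
  have cy: "card (img y) = Suc (fst y)" unfolding img_def
    using smono_inj[OF sy] by (simp add: card_image)
  have f: "fst x = fst y" using cx cy im by simp
  have "snd x i = snd y i" for i
  proof (cases "i \<le> fst x")
    case True
    have "snd x i \<in> img y" using im True unfolding img_def by auto
    then obtain j where j: "j \<le> fst y" "snd y j = snd x i" unfolding img_def by auto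
    have "card {b \<in> img x. b < snd x i} = i" using card_below[OF sx True] unfolding img_def .
    moreover have "card {b \<in> img y. b < snd y j} = j" using card_below[OF sy j(1)] unfolding img_def .
    ultimately have "i = j" using im j(2) by simp
    thus ?thesis using j by simp
  next
    case False thus ?thesis using x y f unfolding delta_S_iff sop_def by auto
  qed
  thus ?thesis using f by (simp add: prod_eq_iff fun_eq_iff)
qed

lemma enum_exists:
  assumes "V \<subseteq> {..n}" "V \<noteq> {}"
  shows "\<exists>m s. sop m n s \<and> inj_on s {..m} \<and> s ` {..m} = V \<and> Suc m = card V"
proof -
  have fin: "finite V" using assms(1) finite_subset by blast
  define xs where "xs = sorted_list_of_set V"
  have sxs: "sorted xs" "distinct xs" "set xs = V" "length xs = card V"
    using fin by (auto simp: xs_def)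
  have cp: "card V > 0" using fin assms(2) by (simp add: card_gt_0_iff)
  define m where "m = length xs - 1"
  have lm: "length xs = Suc m" using sxs(4) cp unfolding m_def by simp
  define s where "s = (\<lambda>i. if i \<le> m then xs ! i else 0)"
  have img: "s ` {..m} = V"
  proof -
    have "s ` {..m} = (\<lambda>i. xs ! i) ` {..<length xs}" unfolding s_def lm
      by (auto simp: image_def less_Suc_eq_le)
    also have "\<dots> = set xs" by (auto simp: set_conv_nth)
    finally show ?thesis using sxs by simp
  qed
  have "sop m n s" unfolding sop_def
  proof (intro conjI allI impI)
    fix i j assume "i \<le> j" "j \<le> m"
    thus "s i \<le> s j" unfolding s_def using sorted_nth_mono[OF sxs(1)] lm by auto
  next
    fix i assume "i \<le> m"
    hence "s i \<in> V" using img by auto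
    thus "s i \<le> n" using assms(1) by auto
  qed (auto simp: s_def)
  moreover have "inj_on s {..m}"
    unfolding inj_on_def s_def using sxs(2) lm by (auto simp: nth_eq_iff_index_eq)
  ultimately show ?thesis using img lm sxs(4) by auto
qed

lemma pos_succ:
  assumes "smono m s" "l \<le> m" "s l = v" "Suc v \<in> s ` {..m}"
  shows "l < m \<and> s (Suc l) = Suc v"
proof -
  obtain j where j: "j \<le> m" "s j = Suc v" using assms(4) by auto
  have "l < j" using smono_less_iff[OF assms(1) assms(2) j(1)] j assms(3) by simp
  hence "Suc l \<le> j" by simp
  hence "s (Suc l) \<le> Suc v" using smono_le_iff[OF assms(1), of "Suc l" j] j by simp
  moreover have "s l < s (Suc l)" using smono_less_iff[OF assms(1), of l "Suc l"] \<open>l < j\<close> j by simp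
  ultimately show ?thesis using assms(3) \<open>l < j\<close> j by simp
qed

lemma pos_pred:
  assumes "smono m s" "l \<le> m" "s l = v" "0 < v" "v - 1 \<in> s ` {..m}"
  shows "0 < l \<and> s (l - 1) = v - 1"
proof -
  obtain j where j: "j \<le> m" "s j = v - 1" using assms(5) by auto
  have "j < l" using smono_less_iff[OF assms(1) j(1) assms(2)] j assms(3,4) by simp
  hence "j \<le> l - 1" by simp
  hence "v - 1 \<le> s (l - 1)" using smono_le_iff[OF assms(1), of j "l - 1"] j assms(2) by simp
  moreover have "s (l - 1) < s l" using smono_less_iff[OF assms(1), of "l - 1" l] \<open>j < l\<close> assms(2) by simp
  ultimately show ?thesis using assms(3,4) \<open>j < l\<close> by simp
qed




lemma sub_mkD: "sub (mkD n Th) S' T' = \<lparr>S = S', dm = fst, act = delta_act, T = T'\<rparr>"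
  by (simp add: sub_def mkD_def)

lemma strat_closed: "strat X \<Longrightarrow> x \<in> S X \<Longrightarrow> sop k (dm X x) f \<Longrightarrow> act X f k x \<in> S X"
  unfolding strat_def sset_def by blast

lemma strat_TS: "strat X \<Longrightarrow> T X \<subseteq> S X"
  unfolding strat_def by blast

lemma strat_Tdim: "strat X \<Longrightarrow> x \<in> T X \<Longrightarrow> dm X x \<noteq> 0"
  unfolding strat_def by blast

lemma rel_pres:
  assumes "(u, v) \<in> (R \<union> R\<inverse>)\<^sup>*" and "R = {(Inl a, Inr (f a)) | a. a \<in> SA}"
  shows "case_sum f id u = case_sum f id v"
  using assms(1)
proof (induction rule: rtrancl_induct)
  case base thus ?case by simp
next
  case (step y z) thus ?case using assms(2) by auto
qed

lemma pushout_gen: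
  assumes Y: "strat (mkD n Th)"
    and sm: "sop m n s" "inj_on s {..m}"
    and A: "A = \<lparr>S = SA, dm = fst, act = delta_act, T = TA\<rparr>" "strat A"
    and B: "B = \<lparr>S = delta_S m, dm = fst, act = delta_act, T = TB\<rparr>" "strat B"
    and AB: "SA \<subseteq> delta_S m" "TA \<subseteq> TB"
    and C: "strat \<lparr>S = Sc, dm = fst, act = delta_act, T = Tc\<rparr>" "Sc \<subseteq> delta_S n" "Tc \<subseteq> Th"
    and i1: "phiS m s ` SA \<subseteq> Sc" and i2: "phiS m s ` TA \<subseteq> Tc"
    and dj: "\<forall>y \<in> delta_S m - SA. phiS m s y \<notin> Sc"
    and Sd: "Sd = Sc \<union> phiS m s ` delta_S m" and Td: "Td = Tc \<union> phiS m s ` TB" "Td \<subseteq> Th"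
  shows "is_pushout A B (sub (mkD n Th) Sc Tc) (sub (mkD n Th) Sd Td) id (phiS m s) (phiS m s) id
         \<and> strat (sub (mkD n Th) Sd Td)"
proof -
  let ?phi = "phiS m s"
  have Cc: "\<And>x k f. x \<in> Sc \<Longrightarrow> sop k (fst x) f \<Longrightarrow> delta_act f k x \<in> Sc"
    using strat_closed[OF C(1)] by simp
  have CT: "Tc \<subseteq> Sc" using strat_TS[OF C(1)] by simp
  have BT: "TB \<subseteq> delta_S m" using strat_TS[OF B(2)] B(1) by simp
  have stD: "strat \<lparr>S = Sd, dm = fst, act = delta_act, T = Td\<rparr>"
  proof (rule strat_rec[where n = n])
    show "Sd \<subseteq> delta_S n" using C(2) phi_in[OF sm(1)] Sd by auto
  next
    fix x k f assume x: "x \<in> Sd" and f: "sop k (fst x) f"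
    show "delta_act f k x \<in> Sd"
    proof (cases "x \<in> Sc")
      case True thus ?thesis using Cc f Sd by auto
    next
      case False
      then obtain y where y: "y \<in> delta_S m" "x = ?phi y" using x Sd by auto
      have "delta_act f k x = ?phi (delta_act f k y)" using phi_act f y by simp
      moreover have "delta_act f k y \<in> delta_S m" using act_in y f by simp
      ultimately show ?thesis using Sd by auto
    qed
  next
    show "Td \<subseteq> Sd" using Td CT BT Sd by auto
  next
    fix x assume x: "x \<in> Sd" and d: "degen x"
    show "x \<in> Td"
    proof (cases "x \<in> Sc")
      case True
      have "x \<in> T \<lparr>S = Sc, dm = fst, act = delta_act, T = Tc\<rparr>"
        by (rule degen_thin[OF C(1)]) (use True d C(2) in auto)
      thus ?thesis using Td by simp
    next
      case False
      then obtain y where y: "y \<in> delta_S m" "x = ?phi y" using x Sd by auto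
      have "degen y" using degen_phi[OF sm y(1)] d y by simp
      hence "y \<in> T B" by (intro degen_thin[OF B(2)]) (use y B(1) in auto)
      thus ?thesis using Td y B(1) by simp
    qed
  next
    fix x assume "x \<in> Td"
    hence "x \<in> T (mkD n Th)" using Td(2) by (auto simp: mkD_def)
    thus "fst x \<noteq> 0" using strat_Tdim[OF Y] by (simp add: mkD_def)
  qed
  have R: "\<forall>u\<in>S B <+> S \<lparr>S = Sc, dm = fst, act = delta_act, T = Tc\<rparr>.
         \<forall>v\<in>S B <+> S \<lparr>S = Sc, dm = fst, act = delta_act, T = Tc\<rparr>.
         (case_sum ?phi id u = case_sum ?phi id v) \<longleftrightarrow>
         (u, v) \<in> ({(Inl (id a), Inr (?phi a)) | a. a \<in> S A} \<union> {(Inl (id a), Inr (?phi a)) | a. a \<in> S A}\<inverse>)\<^sup>*"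
  proof (intro ballI iffI)
    fix u v assume "(u, v) \<in> ({(Inl (id a), Inr (?phi a)) | a. a \<in> S A} \<union> {(Inl (id a), Inr (?phi a)) | a. a \<in> S A}\<inverse>)\<^sup>*"
    thus "case_sum ?phi id u = case_sum ?phi id v" by (rule rel_pres) simp
  next
    let ?R = "{(Inl (id a), Inr (?phi a)) | a. a \<in> S A}"
    fix u v assume u: "u \<in> S B <+> S \<lparr>S = Sc, dm = fst, act = delta_act, T = Tc\<rparr>"
      and v: "v \<in> S B <+> S \<lparr>S = Sc, dm = fst, act = delta_act, T = Tc\<rparr>"
      and e: "case_sum ?phi id u = case_sum ?phi id v"
    show "(u, v) \<in> (?R \<union> ?R\<inverse>)\<^sup>*"
    proof (cases u)
      case (Inl a)
      hence a: "a \<in> delta_S m" using u B(1) by auto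
      show ?thesis
      proof (cases v)
        case (Inl b)
        hence b: "b \<in> delta_S m" using v B(1) by auto
        have "a = b" using e Inl \<open>u = Inl a\<close> inj_onD[OF phi_inj[OF sm(2)] _ a b] by simp
        thus ?thesis using Inl \<open>u = Inl a\<close> by simp
      next
        case (Inr c)
        hence c: "c \<in> Sc" using v by auto
        have "?phi a = c" using e Inr \<open>u = Inl a\<close> by simp
        hence "a \<in> SA" using dj a c by blast
        hence "(Inl a, Inr (?phi a)) \<in> ?R" unfolding A(1) by (cases a) auto
        hence "(u, v) \<in> ?R" using \<open>u = Inl a\<close> Inr \<open>?phi a = c\<close> by simp
        thus ?thesis by auto
      qed
    next
      case (Inr c)
      hence c: "c \<in> Sc" using u by auto
      show ?thesis
      proof (cases v)
        case (Inl a)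
        hence a: "a \<in> delta_S m" using v B(1) by auto
        have "?phi a = c" using e Inl \<open>u = Inr c\<close> by simp
        hence "a \<in> SA" using dj a c by blast
        hence "(Inl a, Inr (?phi a)) \<in> ?R" unfolding A(1) by (cases a) auto
        hence "(v, u) \<in> ?R" using \<open>u = Inr c\<close> Inl \<open>?phi a = c\<close> by simp
        thus ?thesis by auto
      next
        case (Inr d)
        thus ?thesis using e \<open>u = Inr c\<close> by simp
      qed
    qed
  qed
  have "is_pushout A B (sub (mkD n Th) Sc Tc) (sub (mkD n Th) Sd Td) id ?phi ?phi id"
    unfolding is_pushout_def sub_mkD Let_def
  proof (intro conjI)
    show "strat A" "strat B" by fact+
    show "strat \<lparr>S = Sc, dm = fst, act = delta_act, T = Tc\<rparr>" by fact
    show "strat \<lparr>S = Sd, dm = fst, act = delta_act, T = Td\<rparr>" by fact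
    show "smap A B id" unfolding smap_def A(1) B(1) using AB by auto
    show "smap A \<lparr>S = Sc, dm = fst, act = delta_act, T = Tc\<rparr> ?phi"
      unfolding smap_def A(1) using i1 i2 AB phi_act by auto
    show "smap B \<lparr>S = Sd, dm = fst, act = delta_act, T = Td\<rparr> ?phi"
      unfolding smap_def B(1) using Sd Td phi_act by auto
    show "smap \<lparr>S = Sc, dm = fst, act = delta_act, T = Tc\<rparr> \<lparr>S = Sd, dm = fst, act = delta_act, T = Td\<rparr> id"
      unfolding smap_def using Sd Td CT by auto
    show "\<forall>a\<in>S A. ?phi (id a) = id (?phi a)" by simp
    show "S \<lparr>S = Sd, dm = fst, act = delta_act, T = Td\<rparr> = ?phi ` S B \<union> id ` S \<lparr>S = Sc, dm = fst, act = delta_act, T = Tc\<rparr>"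
      using Sd B(1) by auto
    show "T \<lparr>S = Sd, dm = fst, act = delta_act, T = Td\<rparr> = ?phi ` T B \<union> id ` T \<lparr>S = Sc, dm = fst, act = delta_act, T = Tc\<rparr>"
      using Td B(1) by auto
  qed (use R in simp)
  thus ?thesis using stD by (simp add: sub_mkD)
qed




lemma Delta_k_rec: "Delta_k m l = \<lparr>S = delta_S m, dm = fst, act = delta_act, T = Delta_k_T m l\<rparr>"
  by (simp add: Delta_k_def mkD_def)

lemma Lambda_k_rec: "Lambda_k m l = \<lparr>S = {x \<in> delta_S m. snd x ` {..fst x} \<union> {l} \<noteq> {..m}}, dm = fst,
    act = delta_act, T = Delta_k_T m l \<inter> {x \<in> delta_S m. snd x ` {..fst x} \<union> {l} \<noteq> {..m}}\<rparr>"
  by (simp add: Lambda_k_def Delta_k_def sub_mkD Let_def)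

lemma Delta_k'_rec: "Delta_k' m l = \<lparr>S = delta_S m, dm = fst, act = delta_act,
    T = Delta_k_T m l \<union> {dface m i | i. i \<le> m \<and> i \<noteq> l}\<rparr>"
  by (simp add: Delta_k'_def mkD_def)

lemma Delta_k''_rec: "Delta_k'' m l = \<lparr>S = delta_S m, dm = fst, act = delta_act,
    T = Delta_k_T m l \<union> {dface m i | i. i \<le> m}\<rparr>"
  by (simp add: Delta_k''_def mkD_def)

lemma DkT_dim: assumes "1 \<le> m" "l \<le> m" "x \<in> Delta_k_T m l" shows "fst x \<noteq> 0"
proof
  assume f0: "fst x = 0"
  show False
  proof (cases "degen x")
    case True thus False using f0 unfolding degen_def by simp
  next
    case False
    hence adm: "{l - 1, l, Suc l} \<inter> {..m} \<subseteq> snd x ` {..0}"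
      using assms(3) f0 unfolding Delta_k_T_def admissible_def by auto
    show False
    proof (cases "l < m")
      case True
      hence "l \<in> snd x ` {..0}" "Suc l \<in> snd x ` {..0}" using adm by auto
      thus False by auto
    next
      case False
      hence "l \<in> snd x ` {..0}" "l - 1 \<in> snd x ` {..0}" "l - 1 \<noteq> l" using adm assms by auto
      thus False by auto
    qed
  qed
qed

lemma DkT_sub: "Delta_k_T m l \<subseteq> delta_S m" unfolding Delta_k_T_def by auto

lemma DkT_degen: "x \<in> delta_S m \<Longrightarrow> degen x \<Longrightarrow> x \<in> Delta_k_T m l"
  unfolding Delta_k_T_def by auto

lemma dface_in: "1 \<le> m \<Longrightarrow> i \<le> m \<Longrightarrow> dface m i \<in> delta_S m"
  unfolding dface_def delta_S_iff sop_def face_op_def by auto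

lemma DkT_dim': "1 \<le> m \<Longrightarrow> l \<le> m \<Longrightarrow> x \<in> Delta_k_T m l \<Longrightarrow> fst x \<noteq> 0"
  using DkT_dim by blast

lemma strat_Delta_k: assumes "1 \<le> m" "l \<le> m" shows "strat (Delta_k m l)"
  unfolding Delta_k_rec
proof (rule strat_rec[where n = m])
  show "\<And>x ma f. x \<in> delta_S m \<Longrightarrow> sop ma (fst x) f \<Longrightarrow> delta_act f ma x \<in> delta_S m"
    using act_in by blast
  show "Delta_k_T m l \<subseteq> delta_S m" by (rule DkT_sub)
  show "\<And>x. x \<in> delta_S m \<Longrightarrow> degen x \<Longrightarrow> x \<in> Delta_k_T m l" using DkT_degen by blast
  show "\<And>x. x \<in> Delta_k_T m l \<Longrightarrow> fst x \<noteq> 0" using DkT_dim'[OF assms] by blast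
qed simp

lemma strat_Lambda_k: assumes "1 \<le> m" "l \<le> m" shows "strat (Lambda_k m l)"
  unfolding Lambda_k_rec
proof (rule strat_rec[where n = m])
  fix x k f assume x: "x \<in> {x \<in> delta_S m. snd x ` {..fst x} \<union> {l} \<noteq> {..m}}" and f: "sop k (fst x) f"
  have xi: "x \<in> delta_S m" using x by blast
  have a: "delta_act f k x \<in> delta_S m" using act_in[OF xi f] .
  have "img (delta_act f k x) \<subseteq> img x" using img_act_sub[OF f] .
  moreover have "img x \<subseteq> {..m}" using img_sub[OF xi] .
  moreover have "img (delta_act f k x) \<subseteq> {..m}" using img_sub[OF a] .
  moreover have "img x \<union> {l} \<noteq> {..m}" using x unfolding img_def by blast
  ultimately have "img (delta_act f k x) \<union> {l} \<noteq> {..m}" using assms by blast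
  thus "delta_act f k x \<in> {x \<in> delta_S m. snd x ` {..fst x} \<union> {l} \<noteq> {..m}}"
    using a unfolding img_def by blast
next
  show "\<And>x. x \<in> {x \<in> delta_S m. snd x ` {..fst x} \<union> {l} \<noteq> {..m}} \<Longrightarrow> degen x \<Longrightarrow>
    x \<in> Delta_k_T m l \<inter> {x \<in> delta_S m. snd x ` {..fst x} \<union> {l} \<noteq> {..m}}"
    using DkT_degen by blast
  show "\<And>x. x \<in> Delta_k_T m l \<inter> {x \<in> delta_S m. snd x ` {..fst x} \<union> {l} \<noteq> {..m}} \<Longrightarrow> fst x \<noteq> 0"
    using DkT_dim'[OF assms] by blast
qed blast+

lemma strat_Delta_k': assumes "2 \<le> m" "l \<le> m" shows "strat (Delta_k' m l)"
  unfolding Delta_k'_rec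
proof (rule strat_rec[where n = m])
  show "\<And>x ma f. x \<in> delta_S m \<Longrightarrow> sop ma (fst x) f \<Longrightarrow> delta_act f ma x \<in> delta_S m"
    using act_in by blast
  show "Delta_k_T m l \<union> {dface m i | i. i \<le> m \<and> i \<noteq> l} \<subseteq> delta_S m"
    using DkT_sub dface_in[of m] assms by auto
  show "\<And>x. x \<in> delta_S m \<Longrightarrow> degen x \<Longrightarrow> x \<in> Delta_k_T m l \<union> {dface m i | i. i \<le> m \<and> i \<noteq> l}"
    using DkT_degen by blast
  fix x assume "x \<in> Delta_k_T m l \<union> {dface m i | i. i \<le> m \<and> i \<noteq> l}"
  thus "fst x \<noteq> 0" using DkT_dim'[of m l x] assms by (auto simp: dface_def)
qed simp

lemma strat_Delta_k'': assumes "2 \<le> m" "l \<le> m" shows "strat (Delta_k'' m l)"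
  unfolding Delta_k''_rec
proof (rule strat_rec[where n = m])
  show "\<And>x ma f. x \<in> delta_S m \<Longrightarrow> sop ma (fst x) f \<Longrightarrow> delta_act f ma x \<in> delta_S m"
    using act_in by blast
  show "Delta_k_T m l \<union> {dface m i | i. i \<le> m} \<subseteq> delta_S m"
    using DkT_sub dface_in[of m] assms by auto
  show "\<And>x. x \<in> delta_S m \<Longrightarrow> degen x \<Longrightarrow> x \<in> Delta_k_T m l \<union> {dface m i | i. i \<le> m}"
    using DkT_degen by blast
  fix x assume "x \<in> Delta_k_T m l \<union> {dface m i | i. i \<le> m}"
  thus "fst x \<noteq> 0" using DkT_dim'[of m l x] assms by (auto simp: dface_def)
qed simp




fun chainL :: "bool \<Rightarrow> 'a strat \<Rightarrow> ('a set \<times> 'a set) list \<Rightarrow> bool" where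
  "chainL inner Y [] = False"
| "chainL inner Y [c] = True"
| "chainL inner Y (c # d # rest) = (anod_step inner Y c d \<and> c \<noteq> d \<and> sle c d \<and> chainL inner Y (d # rest))"

definition slt :: "'a set \<times> 'a set \<Rightarrow> 'a set \<times> 'a set \<Rightarrow> bool" where
  "slt c d \<longleftrightarrow> sle c d \<and> c \<noteq> d"

lemma sle_refl: "sle c c" by (simp add: sle_def)
lemma sle_trans: "sle c d \<Longrightarrow> sle d e \<Longrightarrow> sle c e" unfolding sle_def by auto
lemma sle_antisym: "sle c d \<Longrightarrow> sle d c \<Longrightarrow> c = d" unfolding sle_def by (auto simp: prod_eq_iff)
lemma slt_trans: "slt c d \<Longrightarrow> slt d e \<Longrightarrow> slt c e"
  unfolding slt_def using sle_trans sle_antisym by metis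

lemma chainL_snoc:
  "chainL i Y xs \<Longrightarrow> anod_step i Y (last xs) d \<Longrightarrow> last xs \<noteq> d \<Longrightarrow> sle (last xs) d \<Longrightarrow> chainL i Y (xs @ [d])"
  by (induction i Y xs rule: chainL.induct) auto

lemma chainL_ne: "chainL i Y xs \<Longrightarrow> xs \<noteq> []"
  by (cases xs) auto

lemma chainL_sorted: "chainL i Y xs \<Longrightarrow> sorted_wrt slt xs"
proof (induction i Y xs rule: chainL.induct)
  case (3 inner Y c d rest)
  have h1: "slt c d" using 3 by (simp add: slt_def)
  have h2: "sorted_wrt slt (d # rest)" using 3 by simp
  have "\<forall>x\<in>set rest. slt c x" using h1 h2 slt_trans by (simp only: sorted_wrt.simps) blast
  thus ?case using h1 h2 by simp
qed auto

lemma chainL_nth: "chainL i Y xs \<Longrightarrow> Suc j < length xs \<Longrightarrow> anod_step i Y (xs ! j) (xs ! Suc j)"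
proof (induction i Y xs arbitrary: j rule: chainL.induct)
  case (3 inner Y c d rest)
  show ?case
  proof (cases j)
    case 0 thus ?thesis using 3 by simp
  next
    case (Suc j') thus ?thesis using 3 by simp
  qed
qed auto

lemma sw_le: "sorted_wrt slt xs \<Longrightarrow> i \<le> j \<Longrightarrow> j < length xs \<Longrightarrow> sle (xs ! i) (xs ! j)"
proof (cases "i = j")
  case True thus ?thesis by (simp add: sle_refl)
next
  case False
  assume a: "sorted_wrt slt xs" "i \<le> j" "j < length xs"
  hence "slt (xs ! i) (xs ! j)" using False sorted_wrt_nth_less[OF a(1), of i j] by simp
  thus ?thesis by (simp add: slt_def)
qed

lemma sw_lt: "sorted_wrt slt xs \<Longrightarrow> i < j \<Longrightarrow> j < length xs \<Longrightarrow> slt (xs ! i) (xs ! j)"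
  by (auto dest: sorted_wrt_nth_less)

lemma sw_rev: "sorted_wrt slt xs \<Longrightarrow> i < length xs \<Longrightarrow> j < length xs \<Longrightarrow> sle (xs ! i) (xs ! j) \<Longrightarrow> i \<le> j"
proof (rule ccontr)
  assume a: "sorted_wrt slt xs" "i < length xs" "j < length xs" "sle (xs ! i) (xs ! j)" "\<not> i \<le> j"
  hence "slt (xs ! j) (xs ! i)" using sw_lt[OF a(1), of j i] by simp
  thus False using a(4) sle_antisym unfolding slt_def by metis
qed

lemma memE: assumes "c \<in> set xs" obtains k where "k < length xs" "c = xs ! k"
  using assms by (metis in_set_conv_nth)

lemma chainL_anod:
  assumes ch: "chainL i Y xs" and Y: "strat Y" and sub: "\<forall>c\<in>set xs. substrat Y (fst c) (snd c)"
    and la: "last xs = (S Y, T Y)" and hd: "hd xs = (S', T')"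
  shows "anodyne_incl i Y S' T'"
proof -
  have ne: "xs \<noteq> []" using chainL_ne[OF ch] .
  have sw: "sorted_wrt slt xs" using chainL_sorted[OF ch] .
  have h0: "xs ! 0 = (S', T')" using hd ne by (simp add: hd_conv_nth)
  have lp: "length xs > 0" using ne by simp
  have ll: "xs ! (length xs - 1) = (S Y, T Y)" using la ne by (simp add: last_conv_nth)
  have mem: "c \<in> set xs \<longleftrightarrow> (\<exists>k<length xs. c = xs ! k)" for c by (auto simp: in_set_conv_nth)
  show ?thesis unfolding anodyne_incl_def
  proof (intro conjI exI[of _ "set xs"])
    show "strat Y" by fact
    show "\<forall>c\<in>set xs. substrat Y (fst c) (snd c)" by fact
    show "(S', T') \<in> set xs" using h0 lp nth_mem by metis
    show "\<forall>c\<in>set xs. sle (S', T') c"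
      using sw_le[OF sw, of 0] h0 by (auto simp: mem)
    show "\<forall>c\<in>set xs. \<forall>d\<in>set xs. sle c d \<or> sle d c"
    proof (intro ballI)
      fix c d assume "c \<in> set xs" "d \<in> set xs"
      then obtain a b where "a < length xs" "c = xs ! a" "b < length xs" "d = xs ! b" by (metis memE)
      thus "sle c d \<or> sle d c" using sw_le[OF sw, of a b] sw_le[OF sw, of b a] by (cases "a \<le> b") auto
    qed
    show "\<forall>D. D \<subseteq> set xs \<longrightarrow> D \<noteq> {} \<longrightarrow> (\<exists>c\<in>D. \<forall>d\<in>D. sle c d)"
    proof (intro allI impI)
      fix D assume D: "D \<subseteq> set xs" "D \<noteq> {}"
      then obtain c where "c \<in> D" by auto
      then obtain k where k: "k < length xs" "xs ! k \<in> D" using D by (metis in_mono memE)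
      define i0 where "i0 = (LEAST i. i < length xs \<and> xs ! i \<in> D)"
      have i0: "i0 < length xs \<and> xs ! i0 \<in> D" unfolding i0_def by (rule LeastI[of _ k]) (use k in auto)
      have "\<forall>d\<in>D. sle (xs ! i0) d"
      proof
        fix d assume "d \<in> D"
        then obtain j where j: "j < length xs" "d = xs ! j" using D by (metis in_mono memE)
        have "i0 \<le> j" unfolding i0_def by (rule Least_le) (use j \<open>d \<in> D\<close> in auto)
        thus "sle (xs ! i0) d" using sw_le[OF sw] j by simp
      qed
      thus "\<exists>c\<in>D. \<forall>d\<in>D. sle c d" using i0 by blast
    qed
    have tolast: "sle c (S Y, T Y)" if "c \<in> set xs" for c
      using that sw_le[OF sw, of _ "length xs - 1"] ll by (auto simp: mem)
    show "\<Union> (fst ` set xs) = S Y"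
    proof
      show "\<Union> (fst ` set xs) \<subseteq> S Y" using tolast by (auto simp: sle_def)
      show "S Y \<subseteq> \<Union> (fst ` set xs)" using la ne last_in_set
        by (metis Union_upper fst_conv image_eqI)
    qed
    show "\<Union> (snd ` set xs) = T Y"
    proof
      show "\<Union> (snd ` set xs) \<subseteq> T Y" using tolast by (auto simp: sle_def)
      show "T Y \<subseteq> \<Union> (snd ` set xs)" using la ne last_in_set
        by (metis Union_upper snd_conv image_eqI)
    qed
    show "\<forall>c\<in>set xs. \<forall>d\<in>set xs. c \<noteq> d \<longrightarrow> sle c d \<longrightarrow>
            (\<forall>e\<in>set xs. sle c e \<longrightarrow> e \<noteq> c \<longrightarrow> sle d e) \<longrightarrow> anod_step i Y c d"
    proof (intro ballI impI)
      fix c d assume c: "c \<in> set xs" and d: "d \<in> set xs" and cd: "c \<noteq> d" "sle c d"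
        and nx: "\<forall>e\<in>set xs. sle c e \<longrightarrow> e \<noteq> c \<longrightarrow> sle d e"
      obtain a where a: "a < length xs" "c = xs ! a" using c by (rule memE)
      obtain b where b: "b < length xs" "d = xs ! b" using d by (rule memE)
      have "a \<le> b" using sw_rev[OF sw a(1) b(1)] cd a b by simp
      hence ab: "a < b" using cd a b by (cases "a = b") auto
      have "b = Suc a"
      proof (rule ccontr)
        assume "b \<noteq> Suc a"
        hence sb: "Suc a < b" using ab by simp
        have "slt c (xs ! Suc a)" using sw_lt[OF sw, of a "Suc a"] a b sb by simp
        hence "sle d (xs ! Suc a)" using nx b sb unfolding slt_def by auto
        moreover have "slt (xs ! Suc a) d" using sw_lt[OF sw sb b(1)] b by simp
        ultimately show False using sle_antisym unfolding slt_def by metis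
      qed
      thus "anod_step i Y c d" using chainL_nth[OF ch, of a] a b by simp
    qed
    show "\<forall>c\<in>set xs. c \<noteq> (S', T') \<longrightarrow>
            \<not> (\<exists>b\<in>set xs. b \<noteq> c \<and> sle b c \<and> (\<forall>e\<in>set xs. sle b e \<longrightarrow> e \<noteq> b \<longrightarrow> sle c e)) \<longrightarrow>
            c = (\<Union>{fst b | b. b \<in> set xs \<and> sle b c \<and> b \<noteq> c}, \<Union>{snd b | b. b \<in> set xs \<and> sle b c \<and> b \<noteq> c})"
    proof (intro ballI impI)
      fix c assume c: "c \<in> set xs" and c0: "c \<noteq> (S', T')"
        and nb: "\<not> (\<exists>b\<in>set xs. b \<noteq> c \<and> sle b c \<and> (\<forall>e\<in>set xs. sle b e \<longrightarrow> e \<noteq> b \<longrightarrow> sle c e))"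
      obtain j where j: "j < length xs" "c = xs ! j" using c by (rule memE)
      have j0: "j \<noteq> 0" using j c0 h0 by metis
      have jj: "j - 1 < j" using j0 by simp
      have "slt (xs ! (j - 1)) c" using sw_lt[OF sw jj j(1)] j by simp
      moreover have "\<forall>e\<in>set xs. sle (xs ! (j - 1)) e \<longrightarrow> e \<noteq> xs ! (j - 1) \<longrightarrow> sle c e"
      proof (intro ballI impI)
        fix e assume e: "e \<in> set xs" "sle (xs ! (j - 1)) e" "e \<noteq> xs ! (j - 1)"
        obtain k where k: "k < length xs" "e = xs ! k" using e(1) by (rule memE)
        have "j - 1 \<le> k" using sw_rev[OF sw _ k(1)] e k j by simp
        hence "j \<le> k" using e k by (cases "k = j - 1") auto
        thus "sle c e" using sw_le[OF sw] k j by simp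
      qed
      moreover have "xs ! (j - 1) \<in> set xs" using j by simp
      ultimately have False using nb unfolding slt_def by blast
      thus "c = (\<Union>{fst b | b. b \<in> set xs \<and> sle b c \<and> b \<noteq> c}, \<Union>{snd b | b. b \<in> set xs \<and> sle b c \<and> b \<noteq> c})" ..
    qed
  qed
qed




locale cset =
  fixes n :: nat and K :: "nat set" and Th :: "simplex set"
  assumes n1: "1 \<le> n" and Kne: "K \<noteq> {}" and Ksub: "K \<subseteq> {..n}"
    and gap: "\<forall>a\<in>K. \<forall>b\<in>K. a < b \<longrightarrow> a + 1 < b"
    and Y: "strat (mkD n Th)" and cpl: "complicial n K Th"
begin

definition k1 where "k1 = Min K"
definition U where "U = {..n} - K"
definition V where "V J = U \<union> J"
definition LamS where "LamS = Lambda_vec_S n K"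

lemma finK: "finite K" using Ksub finite_subset by blast
lemma k1K: "k1 \<in> K" unfolding k1_def using finK Kne by simp
lemma k1n: "k1 \<le> n" using k1K Ksub by auto
lemma k1min: "k \<in> K \<Longrightarrow> k1 \<le> k" unfolding k1_def using finK by simp
lemma predU: "0 < k1 \<Longrightarrow> k1 - 1 \<in> U" unfolding U_def using k1min k1n by fastforce
lemma succU: "Suc k1 \<le> n \<Longrightarrow> Suc k1 \<in> U" unfolding U_def using gap k1K by fastforce
lemma k1U: "k1 \<notin> U" unfolding U_def using k1K by simp

lemma ThS: "Th \<subseteq> delta_S n" using strat_TS[OF Y] by (simp add: mkD_def)
lemma Thdim: "x \<in> Th \<Longrightarrow> fst x \<noteq> 0" using strat_Tdim[OF Y, of x] by (simp add: mkD_def)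
lemma degTh: "x \<in> delta_S n \<Longrightarrow> degen x \<Longrightarrow> x \<in> Th"
  using degen_thin[OF Y, of x n] by (simp add: mkD_def)

lemma LamS_iff: "x \<in> LamS \<longleftrightarrow> x \<in> delta_S n \<and> img x \<union> K \<noteq> {..n}"
  unfolding LamS_def Lambda_vec_S_def img_def by blast

lemma notLam: "x \<in> delta_S n \<Longrightarrow> x \<notin> LamS \<longleftrightarrow> U \<subseteq> img x"
  unfolding LamS_iff U_def using img_sub[of x n] Ksub by auto

lemma cpl_a: "k \<in> K \<Longrightarrow> x \<in> delta_S n \<Longrightarrow> \<not> degen x \<Longrightarrow> admissible n k x \<Longrightarrow> x \<in> Th"
  using cpl unfolding complicial_def by blast

lemma adm_k1: "x \<in> delta_S n \<Longrightarrow> U \<subseteq> img x \<Longrightarrow> k1 \<in> img x \<Longrightarrow> admissible n k1 x"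
  unfolding admissible_def using predU succU unfolding img_def[symmetric]
  by (cases "k1 = 0") auto

lemma thin_new: "x \<in> delta_S n \<Longrightarrow> x \<notin> LamS \<Longrightarrow> k1 \<in> img x \<Longrightarrow> x \<in> Th"
  using degTh cpl_a[OF k1K] adm_k1 notLam by blast

end

locale emb = cset +
  fixes m :: nat and s :: "nat \<Rightarrow> nat" and l :: nat
  assumes sm: "sop m n s" and si: "inj_on s {..m}" and sl: "s l = k1" and lm: "l \<le> m"
    and spred: "0 < k1 \<Longrightarrow> k1 - 1 \<in> s ` {..m}" and ssucc: "Suc k1 \<le> n \<Longrightarrow> Suc k1 \<in> s ` {..m}"
begin

lemma smo: "smono m s" using sop_inj_smono[OF sm si] .

lemma lpred: "0 < k1 \<Longrightarrow> 0 < l \<and> s (l - 1) = k1 - 1"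
  using pos_pred[OF smo lm sl _ spred] by simp

lemma lsucc: "Suc k1 \<le> n \<Longrightarrow> l < m \<and> s (Suc l) = Suc k1"
  using pos_succ[OF smo lm sl ssucc] by simp

lemma l0: "k1 = 0 \<Longrightarrow> l = 0"
proof -
  assume "k1 = 0"
  have "s 0 \<le> s l" using smono_le_iff[OF smo, of 0 l] lm by simp
  hence "s 0 = s l" using sl \<open>k1 = 0\<close> by simp
  thus "l = 0" using smono_eq_iff[OF smo, of 0 l] lm by simp
qed

lemma lmax: "n < Suc k1 \<Longrightarrow> l = m"
proof (rule ccontr)
  assume a: "n < Suc k1" "l \<noteq> m"
  hence "l < m" using lm by simp
  hence "s l < s (Suc l)" using smono_less_iff[OF smo, of l "Suc l"] by simp
  moreover have "s (Suc l) \<le> n" using sm \<open>l < m\<close> unfolding sop_def by auto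
  ultimately show False using a sl k1n by simp
qed

lemma m1: "1 \<le> m"
proof (cases "0 < k1")
  case True thus ?thesis using lpred lm by simp
next
  case False thus ?thesis using lsucc n1 by simp
qed

lemma inner_lm: "0 < k1 \<Longrightarrow> k1 < n \<Longrightarrow> 0 < l \<and> l < m"
  using lpred lsucc by simp

abbreviation phi where "phi \<equiv> phiS m s"

lemma thin_fwd:
  assumes y: "y \<in> Delta_k_T m l"
  shows "phi y \<in> Th \<and> (degen (phi y) \<or> k1 \<in> img (phi y))"
proof -
  have yS: "y \<in> delta_S m" using y unfolding Delta_k_T_def by simp
  have pS: "phi y \<in> delta_S n" using phi_in[OF sm yS] .
  show ?thesis
  proof (cases "degen y")
    case True
    hence "degen (phi y)" using degen_phi[OF sm si yS] by simp
    thus ?thesis using degTh pS by simp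
  next
    case False
    hence adm: "{l - 1, l, Suc l} \<inter> {..m} \<subseteq> img y" using y unfolding Delta_k_T_def admissible_def img_def by simp
    have ip: "img (phi y) = s ` img y" using img_phi[OF yS] .
    have "l \<in> img y" using adm lm by auto
    hence a1: "k1 \<in> img (phi y)" using sl ip by (metis imageI)
    have a2: "k1 - 1 \<in> img (phi y)"
    proof (cases "k1 = 0")
      case True thus ?thesis using a1 by simp
    next
      case False
      hence "0 < l" "s (l - 1) = k1 - 1" using lpred by auto
      moreover have "l - 1 \<in> img y" using adm lm by auto
      ultimately show ?thesis using ip by (metis imageI)
    qed
    have a3: "Suc k1 \<le> n \<Longrightarrow> Suc k1 \<in> img (phi y)"
    proof -
      assume "Suc k1 \<le> n"
      hence "l < m" "s (Suc l) = Suc k1" using lsucc by auto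
      moreover have "Suc l \<in> img y" using adm \<open>l < m\<close> by auto
      ultimately show ?thesis using ip by (metis imageI)
    qed
    have "admissible n k1 (phi y)" unfolding admissible_def img_def[symmetric]
      using a1 a2 a3 by auto
    moreover have "\<not> degen (phi y)" using degen_phi[OF sm si yS] False by simp
    ultimately show ?thesis using cpl_a[OF k1K pS] a1 by simp
  qed
qed

lemma adm_back:
  assumes yS: "y \<in> delta_S m" and a1: "k1 \<in> img (phi y)"
    and a2: "0 < k1 \<Longrightarrow> k1 - 1 \<in> img (phi y)" and a3: "Suc k1 \<le> n \<Longrightarrow> Suc k1 \<in> img (phi y)"
  shows "admissible m l y"
proof -
  have ip: "img (phi y) = s ` img y" using img_phi[OF yS] .
  have iy: "img y \<subseteq> {..m}" using img_sub[OF yS] .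
  have bk: "j \<in> img y" if jm: "j \<le> m" and js: "s j \<in> img (phi y)" for j
  proof -
    obtain j' where j': "j' \<in> img y" "s j' = s j" using js ip by auto
    hence "j' = j" using smono_eq_iff[OF smo, of j' j] iy jm by auto
    thus ?thesis using j' by simp
  qed
  have b1: "l \<in> img y" using bk[OF lm] a1 sl by simp
  have b2: "l - 1 \<in> img y"
  proof (cases "k1 = 0")
    case True thus ?thesis using l0 b1 by simp
  next
    case False thus ?thesis using lpred a2 bk[of "l - 1"] lm by simp
  qed
  have b3: "Suc l \<le> m \<Longrightarrow> Suc l \<in> img y"
  proof -
    assume sl': "Suc l \<le> m"
    hence "Suc k1 \<le> n" using lmax by (cases "Suc k1 \<le> n") auto
    thus ?thesis using lsucc a3 bk[of "Suc l"] sl' by simp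
  qed
  show ?thesis unfolding admissible_def img_def[symmetric] using b1 b2 b3 by auto
qed

end




context cset begin

definition Sc where "Sc F = {x \<in> delta_S n. x \<in> LamS \<or> (\<exists>J\<in>F. img x \<subseteq> V J)}"
definition Tc where "Tc F = Th \<inter> Sc F \<inter> {x. x \<in> LamS \<or> degen x \<or> k1 \<in> img x}"

lemma LamS_sub: "LamS \<subseteq> delta_S n" using LamS_iff by blast

lemma Sc_closed: assumes x: "x \<in> Sc F" and f: "sop k (fst x) f" shows "delta_act f k x \<in> Sc F"
proof -
  have xS: "x \<in> delta_S n" using x unfolding Sc_def by simp
  have a: "delta_act f k x \<in> delta_S n" using act_in[OF xS f] .
  have sub: "img (delta_act f k x) \<subseteq> img x" using img_act_sub[OF f] .
  have ia: "img (delta_act f k x) \<subseteq> {..n}" using img_sub[OF a] .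
  show ?thesis
  proof (cases "x \<in> LamS")
    case True
    hence "img x \<union> K \<noteq> {..n}" using LamS_iff by simp
    hence "img (delta_act f k x) \<union> K \<noteq> {..n}" using sub img_sub[OF xS] Ksub ia by blast
    thus ?thesis using a unfolding Sc_def LamS_iff by simp
  next
    case False
    then obtain J where "J \<in> F" "img x \<subseteq> V J" using x unfolding Sc_def by auto
    thus ?thesis using a sub unfolding Sc_def by blast
  qed
qed

lemma strat_stage1: "strat \<lparr>S = Sc F, dm = fst, act = delta_act, T = Tc F\<rparr>"
proof (rule strat_rec[where n = n])
  show "Sc F \<subseteq> delta_S n" unfolding Sc_def by blast
  show "\<And>x k f. x \<in> Sc F \<Longrightarrow> sop k (fst x) f \<Longrightarrow> delta_act f k x \<in> Sc F" using Sc_closed by blast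
  show "Tc F \<subseteq> Sc F" unfolding Tc_def by blast
  show "\<And>x. x \<in> Sc F \<Longrightarrow> degen x \<Longrightarrow> x \<in> Tc F" unfolding Tc_def Sc_def using degTh by blast
  show "\<And>x. x \<in> Tc F \<Longrightarrow> fst x \<noteq> 0" unfolding Tc_def using Thdim by blast
qed

lemma substrat_stage1: "substrat (mkD n Th) (Sc F) (Tc F)"
  unfolding substrat_def sub_mkD using strat_stage1 by (auto simp: mkD_def Sc_def Tc_def)

lemma Sc_mono: "F \<subseteq> F' \<Longrightarrow> Sc F \<subseteq> Sc F'" unfolding Sc_def by blast
lemma Tc_mono: "F \<subseteq> F' \<Longrightarrow> Tc F \<subseteq> Tc F'" unfolding Tc_def using Sc_mono by blast

lemma VJ_sub: "J \<subseteq> K \<Longrightarrow> V J \<subseteq> {..n}" unfolding V_def U_def using Ksub by auto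

lemma UK: "U \<inter> K = {}" unfolding U_def by auto

lemma hstep:
  assumes J: "J \<subseteq> K" "k1 \<in> J" "J \<notin> F'"
    and F': "\<And>J'. J' \<in> F' \<Longrightarrow> J' \<subseteq> K" and F'k: "\<And>J'. J' \<in> F' \<Longrightarrow> k1 \<in> J'"
    and below: "\<And>J'. J' \<subseteq> J \<Longrightarrow> k1 \<in> J' \<Longrightarrow> J' \<noteq> J \<Longrightarrow> J' \<in> F'"
    and nsup: "\<And>J'. J' \<in> F' \<Longrightarrow> \<not> J \<subseteq> J'"
    and inn: "inner \<Longrightarrow> 0 < k1 \<and> k1 < n"
  shows "anod_step inner (mkD n Th) (Sc F', Tc F') (Sc (insert J F'), Tc (insert J F'))
       \<and> Sc F' \<noteq> Sc (insert J F')"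
proof -
  have VJn: "V J \<subseteq> {..n}" using VJ_sub[OF J(1)] .
  have k1V: "k1 \<in> V J" using J(2) unfolding V_def by simp
  obtain m s where ms: "sop m n s" "inj_on s {..m}" "s ` {..m} = V J"
    using enum_exists[OF VJn] k1V by blast
  obtain l where l: "l \<le> m" "s l = k1" using ms(3) k1V by (metis atMost_iff imageE)
  interpret e: emb n K Th m s l
  proof
    show "0 < k1 \<Longrightarrow> k1 - 1 \<in> s ` {..m}" using predU ms(3) unfolding V_def by auto
    show "Suc k1 \<le> n \<Longrightarrow> Suc k1 \<in> s ` {..m}" using succU ms(3) unfolding V_def by auto
  qed (use ms l in auto)
  let ?phi = "phiS m s"
  let ?SA = "{x \<in> delta_S m. snd x ` {..fst x} \<union> {l} \<noteq> {..m}}"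
  have phiV: "{x \<in> delta_S n. img x \<subseteq> V J} = ?phi ` delta_S m"
  proof
    show "{x \<in> delta_S n. img x \<subseteq> V J} \<subseteq> ?phi ` delta_S m"
      using phi_surj[OF ms(1,2)] ms(3) by blast
    show "?phi ` delta_S m \<subseteq> {x \<in> delta_S n. img x \<subseteq> V J}"
    proof
      fix x assume "x \<in> ?phi ` delta_S m"
      then obtain y where y: "y \<in> delta_S m" "x = ?phi y" by auto
      have "img x = s ` img y" using img_phi[OF y(1)] y(2) by simp
      hence "img x \<subseteq> V J" using img_sub[OF y(1)] ms(3) by auto
      thus "x \<in> {x \<in> delta_S n. img x \<subseteq> V J}" using phi_in[OF ms(1) y(1)] y(2) by simp
    qed
  qed
  have ScI: "Sc (insert J F') = Sc F' \<union> ?phi ` delta_S m"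
    unfolding phiV[symmetric] Sc_def by auto
  have i1: "?phi y \<in> Sc F'" if y: "y \<in> ?SA" for y
  proof -
    have yS: "y \<in> delta_S m" using y by simp
    have pS: "?phi y \<in> delta_S n" using phi_in[OF ms(1) yS] .
    have iy: "img y \<subseteq> {..m}" using img_sub[OF yS] .
    have "img y \<union> {l} \<noteq> {..m}" using y unfolding img_def by simp
    then obtain j where j: "j \<le> m" "j \<noteq> l" "j \<notin> img y" using iy l(1) by auto
    have ip: "img (?phi y) = s ` img y" using img_phi[OF yS] .
    have sj: "s j \<notin> img (?phi y)"
    proof
      assume "s j \<in> img (?phi y)"
      then obtain j' where "j' \<in> img y" "s j' = s j" using ip by auto
      hence "j' = j" using smono_eq_iff[OF e.smo, of j' j] iy j(1) by auto
      thus False using j \<open>j' \<in> img y\<close> by simp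
    qed
    have sjk: "s j \<noteq> k1" using smono_eq_iff[OF e.smo, of j l] j l by simp
    have sjV: "s j \<in> V J" using ms(3) j(1) by auto
    show ?thesis
    proof (cases "s j \<in> U")
      case True
      hence "?phi y \<in> LamS" using notLam[OF pS] sj by blast
      thus ?thesis unfolding Sc_def using pS by simp
    next
      case False
      hence sjJ: "s j \<in> J" using sjV unfolding V_def by simp
      have "img (?phi y) \<subseteq> V J" using ip iy ms(3) by auto
      hence "img (?phi y) \<subseteq> V (J - {s j})" using sj unfolding V_def by auto
      moreover have "J - {s j} \<in> F'" using below[of "J - {s j}"] sjJ sjk J(2) by auto
      ultimately show ?thesis unfolding Sc_def using pS by blast
    qed
  qed
  have dj: "?phi y \<notin> Sc F'" if y: "y \<in> delta_S m - ?SA" for y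
  proof
    assume inS: "?phi y \<in> Sc F'"
    have yS: "y \<in> delta_S m" using y by simp
    have pS: "?phi y \<in> delta_S n" using phi_in[OF ms(1) yS] .
    have full: "img y \<union> {l} = {..m}" using y unfolding img_def by simp
    have ip: "img (?phi y) = s ` img y" using img_phi[OF yS] .
    have big: "V J - {k1} \<subseteq> img (?phi y)"
    proof
      fix v assume v: "v \<in> V J - {k1}"
      then obtain j where j: "j \<le> m" "s j = v" using ms(3) by (metis DiffD1 atMost_iff imageE)
      have "j \<noteq> l" using j v l by auto
      hence "j \<in> img y" using full j by auto
      thus "v \<in> img (?phi y)" using ip j by auto
    qed
    have "U \<subseteq> img (?phi y)" using big k1U unfolding V_def by auto
    hence nl: "?phi y \<notin> LamS" using notLam[OF pS] by simp
    then obtain J' where J': "J' \<in> F'" "img (?phi y) \<subseteq> V J'" using inS unfolding Sc_def by auto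
    have "J - {k1} \<subseteq> J'" using big J' F'[OF J'(1)] J(1) UK unfolding V_def by blast
    moreover have "k1 \<in> J'" using F'k[OF J'(1)] .
    ultimately show False using nsup[OF J'(1)] by blast
  qed
  have TcI: "Tc (insert J F') = Tc F' \<union> ?phi ` Delta_k_T m l"
  proof
    show "Tc F' \<union> ?phi ` Delta_k_T m l \<subseteq> Tc (insert J F')"
    proof
      fix x assume x: "x \<in> Tc F' \<union> ?phi ` Delta_k_T m l"
      show "x \<in> Tc (insert J F')"
      proof (cases "x \<in> Tc F'")
        case True thus ?thesis using Tc_mono[of F' "insert J F'"] by blast
      next
        case False
        then obtain y where y: "y \<in> Delta_k_T m l" "x = ?phi y" using x by auto
        have yS: "y \<in> delta_S m" using y(1) DkT_sub by blast
        have "x \<in> Sc (insert J F')" using ScI y yS by blast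
        thus ?thesis using e.thin_fwd[OF y(1)] y(2) unfolding Tc_def by blast
      qed
    qed
    show "Tc (insert J F') \<subseteq> Tc F' \<union> ?phi ` Delta_k_T m l"
    proof
      fix x assume x: "x \<in> Tc (insert J F')"
      show "x \<in> Tc F' \<union> ?phi ` Delta_k_T m l"
      proof (cases "x \<in> Sc F'")
        case True thus ?thesis using x unfolding Tc_def by blast
      next
        case False
        then obtain y where y: "y \<in> delta_S m" "x = ?phi y" using x ScI unfolding Tc_def by blast
        have xS: "x \<in> delta_S n" using x unfolding Tc_def Sc_def by blast
        have nl: "x \<notin> LamS" using False xS unfolding Sc_def by blast
        hence Ux: "U \<subseteq> img x" using notLam[OF xS] by simp
        have "degen x \<or> k1 \<in> img x" using x nl unfolding Tc_def by blast
        hence "y \<in> Delta_k_T m l"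
        proof
          assume "degen x"
          hence "degen y" using degen_phi[OF ms(1,2) y(1)] y(2) by simp
          thus ?thesis using DkT_degen y(1) by blast
        next
          assume k: "k1 \<in> img x"
          have "admissible m l y"
            by (rule e.adm_back[OF y(1)]) (use k Ux predU succU y(2) in auto)
          thus ?thesis unfolding Delta_k_T_def using y(1) by blast
        qed
        thus ?thesis using y(2) by blast
      qed
    qed
  qed
  have PO: "is_pushout (Lambda_k m l) (Delta_k m l) (sub (mkD n Th) (Sc F') (Tc F'))
      (sub (mkD n Th) (Sc (insert J F')) (Tc (insert J F'))) id ?phi ?phi id
     \<and> strat (sub (mkD n Th) (Sc (insert J F')) (Tc (insert J F')))"
  proof (rule pushout_gen[OF Y ms(1,2) Lambda_k_rec strat_Lambda_k[OF e.m1 l(1)] Delta_k_rec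
        strat_Delta_k[OF e.m1 l(1)]])
    show "?SA \<subseteq> delta_S m" by blast
    show "Delta_k_T m l \<inter> ?SA \<subseteq> Delta_k_T m l" by blast
    show "strat \<lparr>S = Sc F', dm = fst, act = delta_act, T = Tc F'\<rparr>" by (rule strat_stage1)
    show "Sc F' \<subseteq> delta_S n" unfolding Sc_def by blast
    show "Tc F' \<subseteq> Th" unfolding Tc_def by blast
    show "?phi ` ?SA \<subseteq> Sc F'" using i1 by blast
    show "?phi ` (Delta_k_T m l \<inter> ?SA) \<subseteq> Tc F'"
    proof
      fix x assume "x \<in> ?phi ` (Delta_k_T m l \<inter> ?SA)"
      then obtain y where y: "y \<in> Delta_k_T m l" "y \<in> ?SA" "x = ?phi y" by blast
      show "x \<in> Tc F'" using i1[OF y(2)] e.thin_fwd[OF y(1)] y(3) unfolding Tc_def by blast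
    qed
    show "\<forall>y\<in>delta_S m - ?SA. ?phi y \<notin> Sc F'" using dj by blast
    show "Sc (insert J F') = Sc F' \<union> ?phi ` delta_S m" by (rule ScI)
    show "Tc (insert J F') = Tc F' \<union> ?phi ` Delta_k_T m l" by (rule TcI)
    show "Tc (insert J F') \<subseteq> Th" unfolding Tc_def by blast
  qed
  have "anod_step inner (mkD n Th) (Sc F', Tc F') (Sc (insert J F'), Tc (insert J F'))"
    unfolding anod_step_def
    apply (rule exI[of _ m], rule exI[of _ l], rule exI[of _ "Lambda_k m l"], rule exI[of _ "Delta_k m l"],
      rule exI[of _ ?phi])
    using PO l(1) e.m1 e.inner_lm inn unfolding elementary_def by auto
  moreover have "Sc F' \<noteq> Sc (insert J F')"
  proof -
    have y0: "(m, ident m) \<in> delta_S m - ?SA" using sop_ident[of m] l(1)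
      by (auto simp: ident_def image_def)
    hence "?phi (m, ident m) \<notin> Sc F'" using dj by blast
    moreover have "?phi (m, ident m) \<in> Sc (insert J F')" using ScI y0 by blast
    ultimately show ?thesis by blast
  qed
  ultimately show ?thesis by blast
qed

end



lemma face_op_smono: "smono m (face_op m i)"
  unfolding smono_def face_op_def by auto

lemma dface_nondeg: "\<not> degen (dface m i)"
  unfolding degen_def dface_def using smono_inj[OF face_op_smono] by simp

lemma img_dface: assumes "1 \<le> m" "i \<le> m" shows "img (dface m i) = {..m} - {i}"
proof
  show "img (dface m i) \<subseteq> {..m} - {i}"
    unfolding img_def dface_def face_op_def using assms by auto
  show "{..m} - {i} \<subseteq> img (dface m i)"
  proof
    fix j assume j: "j \<in> {..m} - {i}"
    show "j \<in> img (dface m i)"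
    proof (cases "j < i")
      case True
      hence "face_op (m - 1) i j = j" "j \<le> m - 1" using assms by (auto simp: face_op_def)
      thus ?thesis unfolding img_def dface_def by (metis atMost_iff fst_conv image_eqI snd_conv)
    next
      case False
      hence ji: "i < j" using j by auto
      hence "face_op (m - 1) i (j - 1) = j" "j - 1 \<le> m - 1" using j by (auto simp: face_op_def)
      thus ?thesis unfolding img_def dface_def by (metis atMost_iff fst_conv image_eqI snd_conv)
    qed
  qed
qed

context cset begin

definition T2 where "T2 G = Th \<inter> {x. x \<in> LamS \<or> degen x \<or> k1 \<in> img x \<or> img x \<in> G}"

lemma strat_stage2: "strat \<lparr>S = delta_S n, dm = fst, act = delta_act, T = T2 G\<rparr>"
proof (rule strat_rec[where n = n])
  show "\<And>x k f. x \<in> delta_S n \<Longrightarrow> sop k (fst x) f \<Longrightarrow> delta_act f k x \<in> delta_S n" using act_in by blast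
  show "T2 G \<subseteq> delta_S n" unfolding T2_def using ThS by blast
  show "\<And>x. x \<in> delta_S n \<Longrightarrow> degen x \<Longrightarrow> x \<in> T2 G" unfolding T2_def using degTh by blast
  show "\<And>x. x \<in> T2 G \<Longrightarrow> fst x \<noteq> 0" unfolding T2_def using Thdim by blast
qed simp

lemma substrat_stage2: "substrat (mkD n Th) (delta_S n) (T2 G)"
  unfolding substrat_def sub_mkD using strat_stage2 by (auto simp: mkD_def T2_def)

lemma dstep:
  assumes a: "a \<in> Th" "\<not> degen a" "a \<notin> LamS" "k1 \<notin> img a" "img a \<notin> G"
    and inn: "inner \<Longrightarrow> 0 < k1 \<and> k1 < n"
  shows "anod_step inner (mkD n Th) (delta_S n, T2 G) (delta_S n, T2 (insert (img a) G))
       \<and> T2 G \<noteq> T2 (insert (img a) G)"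
proof -
  have aS: "a \<in> delta_S n" using a(1) ThS by blast
  have Ua: "U \<subseteq> img a" using notLam[OF aS] a(3) by simp
  define V' where "V' = insert k1 (img a)"
  have V'n: "V' \<subseteq> {..n}" using img_sub[OF aS] k1n unfolding V'_def by auto
  obtain m s where ms: "sop m n s" "inj_on s {..m}" "s ` {..m} = V'" "Suc m = card V'"
    using enum_exists[OF V'n] unfolding V'_def by blast
  obtain l where l: "l \<le> m" "s l = k1" using ms(3) unfolding V'_def by (metis atMost_iff imageE insertI1)
  interpret e: emb n K Th m s l
  proof
    show "0 < k1 \<Longrightarrow> k1 - 1 \<in> s ` {..m}" using predU ms(3) Ua unfolding V'_def by auto
    show "Suc k1 \<le> n \<Longrightarrow> Suc k1 \<in> s ` {..m}" using succU ms(3) Ua unfolding V'_def by auto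
  qed (use ms l in auto)
  let ?phi = "phiS m s"
  have sa: "smono (fst a) (snd a)" using aS a(2) sop_inj_smono unfolding degen_def by auto
  have ca: "card (img a) = Suc (fst a)" unfolding img_def using smono_inj[OF sa] by (simp add: card_image)
  have fa: "fst a \<noteq> 0" using Thdim a(1) by simp
  have finia: "finite (img a)" unfolding img_def by simp
  have "card V' = Suc (card (img a))" unfolding V'_def using a(4) finia by simp
  hence m2: "2 \<le> m" using ms(4) ca fa by simp
  have m1: "1 \<le> m" using m2 by simp
  have imgpf: "img (?phi (dface m i)) = s ` ({..m} - {i})" if "i \<le> m" for i
    using img_phi[OF dface_in[OF m1 that]] img_dface[OF m1 that] by simp
  have pfS: "?phi (dface m i) \<in> delta_S n" if "i \<le> m" for i using phi_in[OF ms(1) dface_in[OF m1 that]] .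
  have pfnd: "\<not> degen (?phi (dface m i))" if "i \<le> m" for i
    using degen_phi[OF ms(1,2) dface_in[OF m1 that]] dface_nondeg by simp
  have simg: "s ` ({..m} - {i}) = V' - {s i}" if "i \<le> m" for i
    using ms(2,3) that by (auto simp: inj_on_def)
  have pa: "?phi (dface m l) = a"
  proof (rule nondeg_unique[OF pfS[OF l(1)] pfnd[OF l(1)] aS a(2)])
    show "img (?phi (dface m l)) = img a" using imgpf[OF l(1)] simg[OF l(1)] l a(4) unfolding V'_def by auto
  qed
  have sigS: "(m, s) \<in> delta_S n" using ms(1) by simp
  have signd: "\<not> degen (m, s)" using ms(2) unfolding degen_def by simp
  have sigadm: "admissible n k1 (m, s)"
    using adm_k1[OF sigS] Ua ms(3) unfolding img_def V'_def by auto
  have pfeq: "?phi (dface m i) = delta_act (face_op (m - 1) i) (m - 1) (m, s)" for i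
    unfolding phiS_def dface_def by simp
  have faceTh: "?phi (dface m i) \<in> Th" if i: "i \<le> m" "i \<noteq> l" for i
  proof (cases "(Suc i = l \<or> i = Suc l)")
    case True
    have "\<forall>l'\<le>fst (m, s). snd (m, s) l' = k1 \<longrightarrow> delta_act (face_op (fst (m, s) - 1) l') (fst (m, s) - 1) (m, s) \<in> Th \<longrightarrow>
            (\<forall>j\<le>fst (m, s). (Suc j = l' \<or> j = Suc l') \<longrightarrow> delta_act (face_op (fst (m, s) - 1) j) (fst (m, s) - 1) (m, s) \<in> Th)"
      using cpl k1K sigS signd sigadm unfolding complicial_def by blast
    moreover have "delta_act (face_op (m - 1) l) (m - 1) (m, s) \<in> Th" using pa pfeq a(1) by metis
    ultimately have "delta_act (face_op (m - 1) i) (m - 1) (m, s) \<in> Th" using l i True by auto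
    thus ?thesis using pfeq by simp
  next
    case False
    have ip: "img (?phi (dface m i)) = V' - {s i}" using imgpf[OF i(1)] simg[OF i(1)] by simp
    have sik: "s i \<noteq> k1" using smono_eq_iff[OF e.smo, of i l] i l by simp
    have "admissible n k1 (?phi (dface m i))" unfolding admissible_def img_def[symmetric] ip
    proof
      fix v assume v: "v \<in> {k1 - 1, k1, Suc k1} \<inter> {..n}"
      show "v \<in> V' - {s i}"
      proof (cases "v = k1")
        case True thus ?thesis using sik unfolding V'_def by simp
      next
        case vk: False
        show ?thesis
        proof (cases "v = Suc k1")
          case True
          hence "Suc k1 \<le> n" using v by simp
          hence "l < m" "s (Suc l) = Suc k1" using e.lsucc by auto
          moreover have "s i \<noteq> s (Suc l)" using smono_eq_iff[OF e.smo, of i "Suc l"] i False \<open>l < m\<close> by simp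
          ultimately show ?thesis using True succU \<open>Suc k1 \<le> n\<close> Ua unfolding V'_def by auto
        next
          case False2: False
          hence vv: "v = k1 - 1" "0 < k1" using v vk by auto
          hence "0 < l" "s (l - 1) = k1 - 1" using e.lpred by auto
          moreover have "s i \<noteq> s (l - 1)" using smono_eq_iff[OF e.smo, of i "l - 1"] i False \<open>0 < l\<close> l by auto
          ultimately show ?thesis using vv predU Ua unfolding V'_def by auto
        qed
      qed
    qed
    thus ?thesis using cpl_a[OF k1K pfS[OF i(1)] pfnd[OF i(1)]] by simp
  qed
  let ?TA = "Delta_k_T m l \<union> {dface m i | i. i \<le> m \<and> i \<noteq> l}"
  let ?TB = "Delta_k_T m l \<union> {dface m i | i. i \<le> m}"
  have TAimg: "?phi ` ?TA \<subseteq> T2 G"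
  proof
    fix x assume "x \<in> ?phi ` ?TA"
    then obtain y where y: "y \<in> ?TA" "x = ?phi y" by blast
    show "x \<in> T2 G"
    proof (cases "y \<in> Delta_k_T m l")
      case True thus ?thesis using e.thin_fwd[OF True] y(2) unfolding T2_def by blast
    next
      case False
      then obtain i where i: "i \<le> m" "i \<noteq> l" "y = dface m i" using y(1) by blast
      have "k1 \<in> img x" using y(2) i imgpf[OF i(1)] simg[OF i(1)] smono_eq_iff[OF e.smo, of i l] l
        unfolding V'_def by auto
      thus ?thesis using faceTh[OF i(1,2)] y(2) i(3) unfolding T2_def by blast
    qed
  qed
  have T2I: "T2 (insert (img a) G) = T2 G \<union> ?phi ` ?TB"
  proof
    show "T2 (insert (img a) G) \<subseteq> T2 G \<union> ?phi ` ?TB"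
    proof
      fix x assume x: "x \<in> T2 (insert (img a) G)"
      show "x \<in> T2 G \<union> ?phi ` ?TB"
      proof (cases "x \<in> T2 G")
        case False
        hence xa: "img x = img a" "\<not> degen x" "x \<in> Th" using x unfolding T2_def by auto
        hence "x = a" using nondeg_unique[OF _ xa(2) aS a(2) xa(1)] ThS by blast
        moreover have "dface m l \<in> ?TB" using l by blast
        ultimately show ?thesis using pa by blast
      qed simp
    qed
    show "T2 G \<union> ?phi ` ?TB \<subseteq> T2 (insert (img a) G)"
    proof -
      have "T2 G \<subseteq> T2 (insert (img a) G)" unfolding T2_def by blast
      moreover have "?phi ` ?TA \<subseteq> T2 (insert (img a) G)" using TAimg unfolding T2_def by blast
      moreover have "a \<in> T2 (insert (img a) G)" using a(1) unfolding T2_def by blast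
      moreover have "?phi ` ?TB \<subseteq> ?phi ` ?TA \<union> {a}" using pa by blast
      ultimately show ?thesis by blast
    qed
  qed
  have PO: "is_pushout (Delta_k' m l) (Delta_k'' m l) (sub (mkD n Th) (delta_S n) (T2 G))
      (sub (mkD n Th) (delta_S n) (T2 (insert (img a) G))) id ?phi ?phi id
     \<and> strat (sub (mkD n Th) (delta_S n) (T2 (insert (img a) G)))"
  proof (rule pushout_gen[OF Y ms(1,2) Delta_k'_rec strat_Delta_k'[OF m2 l(1)] Delta_k''_rec
        strat_Delta_k''[OF m2 l(1)]])
    show "delta_S m \<subseteq> delta_S m" by simp
    show "?TA \<subseteq> ?TB" by blast
    show "strat \<lparr>S = delta_S n, dm = fst, act = delta_act, T = T2 G\<rparr>" by (rule strat_stage2)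
    show "delta_S n \<subseteq> delta_S n" by simp
    show "T2 G \<subseteq> Th" unfolding T2_def by blast
    show "?phi ` delta_S m \<subseteq> delta_S n" using phi_in[OF ms(1)] by blast
    show "?phi ` ?TA \<subseteq> T2 G" by (rule TAimg)
    show "\<forall>y\<in>delta_S m - delta_S m. ?phi y \<notin> delta_S n" by simp
    show "delta_S n = delta_S n \<union> ?phi ` delta_S m" using phi_in[OF ms(1)] by blast
    show "T2 (insert (img a) G) = T2 G \<union> ?phi ` ?TB" by (rule T2I)
    show "T2 (insert (img a) G) \<subseteq> Th" unfolding T2_def by blast
  qed
  have "anod_step inner (mkD n Th) (delta_S n, T2 G) (delta_S n, T2 (insert (img a) G))"
    unfolding anod_step_def
    apply (rule exI[of _ m], rule exI[of _ l], rule exI[of _ "Delta_k' m l"], rule exI[of _ "Delta_k'' m l"],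
      rule exI[of _ ?phi])
    using PO l(1) m2 e.inner_lm inn unfolding elementary_def by auto
  moreover have "a \<notin> T2 G" using a unfolding T2_def by blast
  moreover have "a \<in> T2 (insert (img a) G)" using a unfolding T2_def by blast
  ultimately show ?thesis by blast
qed

end



context cset begin

definition Fall where "Fall = {J. J \<subseteq> K \<and> k1 \<in> J}"

lemma phase1:
  assumes inn: "inner \<Longrightarrow> 0 < k1 \<and> k1 < n"
  shows "finite F \<Longrightarrow> F \<subseteq> Fall \<Longrightarrow> (\<forall>J\<in>F. \<forall>J'. J' \<subseteq> J \<longrightarrow> k1 \<in> J' \<longrightarrow> J' \<in> F) \<Longrightarrow>
    \<exists>xs. chainL inner (mkD n Th) xs \<and> hd xs = (LamS, Th \<inter> LamS) \<and> last xs = (Sc F, Tc F)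
       \<and> (\<forall>c\<in>set xs. substrat (mkD n Th) (fst c) (snd c))"
proof (induction "card F" arbitrary: F rule: less_induct)
  case less
  show ?case
  proof (cases "F = {}")
    case True
    have "Sc {} = LamS" unfolding Sc_def using LamS_sub by auto
    moreover have "Tc {} = Th \<inter> LamS" unfolding Tc_def Sc_def using LamS_sub by auto
    ultimately show ?thesis using True substrat_stage1[of "{}"]
      by (intro exI[of _ "[(Sc {}, Tc {})]"]) auto
  next
    case False
    have fc: "finite (card ` F)" using less.prems(1) by simp
    have "Max (card ` F) \<in> card ` F" using Max_in[OF fc] False by simp
    then obtain J where J1: "J \<in> F" "card J = Max (card ` F)" by auto
    have J: "J \<in> F" "\<forall>J'\<in>F. card J' \<le> card J"
      using J1 Max_ge[OF fc] by auto
    have finJ: "\<And>J'. J' \<in> Fall \<Longrightarrow> finite J'" unfolding Fall_def using finK finite_subset by blast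
    have JF: "J \<subseteq> K" "k1 \<in> J" using J(1) less.prems(2) unfolding Fall_def by auto
    define F' where "F' = F - {J}"
    have nsup: "\<not> J \<subseteq> J'" if "J' \<in> F'" for J'
    proof
      assume "J \<subseteq> J'"
      moreover have "finite J'" using that less.prems(2) finJ unfolding F'_def by blast
      moreover have "card J' \<le> card J" using J(2) that unfolding F'_def by blast
      ultimately have "J = J'" using card_subset_eq by (metis le_antisym card_mono)
      thus False using that unfolding F'_def by simp
    qed
    have cl': "\<forall>J\<in>F'. \<forall>J'. J' \<subseteq> J \<longrightarrow> k1 \<in> J' \<longrightarrow> J' \<in> F'"
    proof (intro ballI allI impI)
      fix J1 J2 assume a: "J1 \<in> F'" "J2 \<subseteq> J1" "k1 \<in> J2"
      have "J2 \<in> F" using less.prems(3) a unfolding F'_def by blast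
      moreover have "J2 \<noteq> J" using nsup[OF a(1)] a(2) by blast
      ultimately show "J2 \<in> F'" unfolding F'_def by simp
    qed
    have cF': "card F' < card F" unfolding F'_def using J(1) less.prems(1) by (meson card_Diff1_less)
    obtain xs where xs: "chainL inner (mkD n Th) xs" "hd xs = (LamS, Th \<inter> LamS)" "last xs = (Sc F', Tc F')"
       "\<forall>c\<in>set xs. substrat (mkD n Th) (fst c) (snd c)"
      using less.hyps[OF cF'] less.prems cl' unfolding F'_def by blast
    have FI: "F = insert J F'" unfolding F'_def using J(1) by auto
    have st: "anod_step inner (mkD n Th) (Sc F', Tc F') (Sc (insert J F'), Tc (insert J F'))
       \<and> Sc F' \<noteq> Sc (insert J F')"
    proof (rule hstep[OF JF])
      show "J \<notin> F'" unfolding F'_def by simp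
      show "\<And>J'. J' \<in> F' \<Longrightarrow> J' \<subseteq> K" "\<And>J'. J' \<in> F' \<Longrightarrow> k1 \<in> J'"
        using less.prems(2) unfolding F'_def Fall_def by auto
      show "\<And>J'. J' \<subseteq> J \<Longrightarrow> k1 \<in> J' \<Longrightarrow> J' \<noteq> J \<Longrightarrow> J' \<in> F'"
        using less.prems(3) J(1) unfolding F'_def by blast
      show "\<And>J'. J' \<in> F' \<Longrightarrow> \<not> J \<subseteq> J'" using nsup by blast
      show "inner \<Longrightarrow> 0 < k1 \<and> k1 < n" by (rule inn)
    qed
    have sle: "sle (Sc F', Tc F') (Sc F, Tc F)" unfolding sle_def FI
      using Sc_mono[of F' "insert J F'"] Tc_mono[of F' "insert J F'"] by auto
    have "chainL inner (mkD n Th) (xs @ [(Sc F, Tc F)])"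
      by (rule chainL_snoc[OF xs(1)]) (use xs(3) st sle FI in auto)
    moreover have "hd (xs @ [(Sc F, Tc F)]) = (LamS, Th \<inter> LamS)" using xs(2) chainL_ne[OF xs(1)] by simp
    moreover have "last (xs @ [(Sc F, Tc F)]) = (Sc F, Tc F)" by simp
    moreover have "\<forall>c\<in>set (xs @ [(Sc F, Tc F)]). substrat (mkD n Th) (fst c) (snd c)"
      using xs(4) substrat_stage1[of F] by auto
    ultimately show ?thesis by blast
  qed
qed

definition Wall where "Wall = {img x | x. x \<in> Th \<and> \<not> degen x \<and> x \<notin> LamS \<and> k1 \<notin> img x}"

lemma finWall: "finite Wall"
proof -
  have "Wall \<subseteq> Pow {..n}" unfolding Wall_def using ThS img_sub by blast
  thus ?thesis using finite_subset by blast
qed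

lemma phase2:
  assumes inn: "inner \<Longrightarrow> 0 < k1 \<and> k1 < n"
  shows "finite G \<Longrightarrow> G \<subseteq> Wall \<Longrightarrow>
    \<exists>xs. chainL inner (mkD n Th) xs \<and> hd xs = (LamS, Th \<inter> LamS) \<and> last xs = (delta_S n, T2 G)
       \<and> (\<forall>c\<in>set xs. substrat (mkD n Th) (fst c) (snd c))"
proof (induction G rule: finite_subset_induct')
  case empty
  have fF: "finite Fall" unfolding Fall_def using finK by simp
  obtain xs where xs: "chainL inner (mkD n Th) xs" "hd xs = (LamS, Th \<inter> LamS)" "last xs = (Sc Fall, Tc Fall)"
       "\<forall>c\<in>set xs. substrat (mkD n Th) (fst c) (snd c)"
    using phase1[OF inn fF] unfolding Fall_def by blast
  have KF: "K \<in> Fall" unfolding Fall_def using k1K by simp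
  have "V K = {..n}" unfolding V_def U_def using Ksub by auto
  hence S: "Sc Fall = delta_S n" unfolding Sc_def using KF img_sub by blast
  have "Tc Fall = T2 {}" unfolding Tc_def T2_def S using ThS by auto
  thus ?case using xs S by auto
next
  case (insert V G)
  obtain a where a: "V = img a" "a \<in> Th" "\<not> degen a" "a \<notin> LamS" "k1 \<notin> img a"
    using insert.hyps(2) unfolding Wall_def by blast
  obtain xs where xs: "chainL inner (mkD n Th) xs" "hd xs = (LamS, Th \<inter> LamS)" "last xs = (delta_S n, T2 G)"
       "\<forall>c\<in>set xs. substrat (mkD n Th) (fst c) (snd c)" using insert.IH by blast
  have st: "anod_step inner (mkD n Th) (delta_S n, T2 G) (delta_S n, T2 (insert (img a) G))
       \<and> T2 G \<noteq> T2 (insert (img a) G)"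
    by (rule dstep[OF a(2,3,4,5)]) (use insert.hyps(4) a(1) inn in auto)
  have sle: "sle (delta_S n, T2 G) (delta_S n, T2 (insert V G))" unfolding sle_def T2_def by auto
  have "chainL inner (mkD n Th) (xs @ [(delta_S n, T2 (insert V G))])"
    by (rule chainL_snoc[OF xs(1)]) (use xs(3) st sle a(1) in auto)
  moreover have "hd (xs @ [(delta_S n, T2 (insert V G))]) = (LamS, Th \<inter> LamS)" using xs(2) chainL_ne[OF xs(1)] by simp
  moreover have "\<forall>c\<in>set (xs @ [(delta_S n, T2 (insert V G))]). substrat (mkD n Th) (fst c) (snd c)"
    using xs(4) substrat_stage2[of "insert V G"] by auto
  moreover have "last (xs @ [(delta_S n, T2 (insert V G))]) = (delta_S n, T2 (insert V G))" by simp
  ultimately show ?case by blast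
qed

lemma main_cset:
  assumes inn: "inner \<Longrightarrow> 0 < k1 \<and> k1 < n"
  shows "anodyne_incl inner (mkD n Th) (Lambda_vec_S n K) (Th \<inter> Lambda_vec_S n K)"
proof -
  obtain xs where xs: "chainL inner (mkD n Th) xs" "hd xs = (LamS, Th \<inter> LamS)" "last xs = (delta_S n, T2 Wall)"
       "\<forall>c\<in>set xs. substrat (mkD n Th) (fst c) (snd c)"
    using phase2[OF inn finWall] by blast
  have "T2 Wall = Th" unfolding T2_def Wall_def by blast
  hence "last xs = (S (mkD n Th), T (mkD n Th))" using xs(3) by (simp add: mkD_def)
  from chainL_anod[OF xs(1) Y xs(4) this] xs(2) show ?thesis unfolding LamS_def by simp
qed

end

theorem mainTheorem2:
  fixes n :: nat and K :: "nat set" and Th :: "simplex set"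
  assumes "1 \<le> n"
    and "K \<noteq> {}" and "K \<subseteq> {..n}"
    and "\<forall>a\<in>K. \<forall>b\<in>K. a < b \<longrightarrow> a + 1 < b"
    and "strat (mkD n Th)"
    and "complicial n K Th"
  shows "anodyne_incl False (mkD n Th) (Lambda_vec_S n K) (Th \<inter> Lambda_vec_S n K)
       \<and> (0 < Min K \<and> Max K < n \<longrightarrow>
            anodyne_incl True (mkD n Th) (Lambda_vec_S n K) (Th \<inter> Lambda_vec_S n K))"
proof -
  interpret c: cset n K Th using assms by unfold_locales
  have fK: "finite K" using c.finK .
  show ?thesis
  proof (intro conjI impI)
    show "anodyne_incl False (mkD n Th) (Lambda_vec_S n K) (Th \<inter> Lambda_vec_S n K)"
      by (rule c.main_cset) simp
    assume h: "0 < Min K \<and> Max K < n"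
    have "Min K \<le> Max K" using fK assms(2) by simp
    hence "0 < c.k1 \<and> c.k1 < n" using h unfolding c.k1_def by simp
    thus "anodyne_incl True (mkD n Th) (Lambda_vec_S n K) (Th \<inter> Lambda_vec_S n K)"
      by (intro c.main_cset) simp
  qed
qed



end
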